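(* Let $\{p^\circ_{(R,\alpha)}\}_{(R,\alpha)}$ be a replacement rule satisfying the Fixation Axiom and representing neutral drift. Then for every state $\mathbf{x}\in\{0,1\}^G\setminus\{\mathbf{a},\mathbf{A}\}$, $\pi_{\mathrm{RMC}}(\bar{\mathbf{x}})=\pi_{\mathrm{RMC}}(\mathbf{x})$, where $\bar{\mathbf{x}}$ is defined by $\bar x_g=1-x_g$ for all $g\in G$.
   Context: Setting. $G$ is a finite nonempty set of genetic sites. A state is $\mathbf{x}\in\{0,1\}^G$; $\mathbf{a}$ is the all-zero state and $\mathbf{A}$ the all-one state. A replacement event is $(R,\alpha)$ with $R\subseteq G$, $\alpha:R\to G$. A replacement rule representing neutral drift is a single probability distribution $\{p^\circ_{(R,\alpha)}\}$ over events, used in every state. With mutation probability $u\in[0,1]$ and bias $\nu\in(0,1)$, the evolutionary Markov chain moves from $\mathbf{x}$: draw $(R,\alpha)$ with probability $p^\circ_{(R,\alpha)}$; independently for $g\in R$, $x'_g=x_{\alpha(g)}$ w.p. $1-u$, $x'_g=1$ w.p. $u\nu$, $x'_g=0$ w.p. $u(1-\nu)$; $x'_g=x_g$ for $g\notin R$. Fixation Axiom: there exist $g\in G$, $m\ge1$, events $(R_k,\alpha_k)_{k=1}^m$ with $p^\circ_{(R_k,\alpha_k)}>0$, $g\in R_k$ for some $k$, and $\tilde\alpha_1\circ\cdots\circ\tilde\alpha_m(h)=g$ for all $h$, where $\tilde\alpha_k$ equals $\alpha_k$ on $R_k$ and the identity elsewhere. For $u>0$ the chain has a unique stationary distribution $\pi_{\mathrm{MSS}}$;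 the rare-mutation conditional distribution is $\pi_{\mathrm{RMC}}(\mathbf{x})=\lim_{u\to0}\pi_{\mathrm{MSS}}(\mathbf{x})/(1-\pi_{\mathrm{MSS}}(\mathbf{a})-\pi_{\mathrm{MSS}}(\mathbf{A}))$ for $\mathbf{x}\notin\{\mathbf{a},\mathbf{A}\}$ (the limit exists and does not depend on $\nu$). *)

theory Defs
  imports "HOL-Analysis.Analysis"
begin

text \<open>A state is a function
'g \<Rightarrow> bool (True = 1, False = 0). A replacement event (R, alpha) with alpha : R \<rightarrow> G
is represented as a pair (R, alpha) with alpha :: 'g \<Rightarrow> 'g, canonically normalised to
be the identity outside R.\<close>

type_synonym 'g state = "'g \<Rightarrow> bool"
type_synonym 'g event = "'g set \<times> ('g \<Rightarrow> 'g)"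

definition all_zero :: "'g state" where "all_zero = (\<lambda>_. False)"
definition all_one :: "'g state" where "all_one = (\<lambda>_. True)"

definition complement_state :: "'g state \<Rightarrow> 'g state" where
  "complement_state x = (\<lambda>g. \<not> x g)"

text \<open>A replacement rule representing neutral drift: one probability distribution over
events, used in every state.\<close>
definition replacement_rule :: "('g::finite event \<Rightarrow> real) \<Rightarrow> bool" where
  "replacement_rule p \<longleftrightarrow>
     (\<forall>e. p e \<ge> 0) \<and> (\<Sum>e\<in>UNIV. p e) = 1 \<and>
     (\<forall>R \<alpha>. p (R, \<alpha>) > 0 \<longrightarrow> (\<forall>g. g \<notin> R \<longrightarrow> \<alpha> g = g))"

definition extend_event :: "'g event \<Rightarrow> ('g \<Rightarrow> 'g)" where
  "extend_event e = (\<lambda>h. if h \<in> fst e then snd e h else h)"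

definition fixation_axiom :: "('g::finite event \<Rightarrow> real) \<Rightarrow> bool" where
  "fixation_axiom p \<longleftrightarrow>
     (\<exists>g (es :: 'g event list). length es \<ge> 1 \<and> (\<forall>e\<in>set es. p e > 0) \<and>
        (\<exists>e\<in>set es. g \<in> fst e) \<and>
        (\<forall>h. foldr (\<circ>) (map extend_event es) id h = g))"

definition site_prob :: "real \<Rightarrow> real \<Rightarrow> 'g state \<Rightarrow> ('g \<Rightarrow> 'g) \<Rightarrow> 'g \<Rightarrow> bool \<Rightarrow> real" where
  "site_prob u \<nu> x \<alpha> g b =
     (if b = x (\<alpha> g) then 1 - u else 0) + (if b then u * \<nu> else u * (1 - \<nu>))"

definition trans_prob :: "('g::finite event \<Rightarrow> real) \<Rightarrow> real \<Rightarrow> real \<Rightarrow> 'g state \<Rightarrow> 'g state \<Rightarrow> real" where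
  "trans_prob p u \<nu> x y =
     (\<Sum>e\<in>UNIV. p e *
        (\<Prod>g\<in>UNIV. if g \<in> fst e then site_prob u \<nu> x (snd e) g (y g)
                    else (if y g = x g then 1 else 0)))"

definition is_stationary :: "('g::finite event \<Rightarrow> real) \<Rightarrow> real \<Rightarrow> real \<Rightarrow> ('g state \<Rightarrow> real) \<Rightarrow> bool" where
  "is_stationary p u \<nu> \<pi> \<longleftrightarrow>
     (\<forall>x. \<pi> x \<ge> 0) \<and> (\<Sum>x\<in>UNIV. \<pi> x) = 1 \<and>
     (\<forall>y. (\<Sum>x\<in>UNIV. \<pi> x * trans_prob p u \<nu> x y) = \<pi> y)"

text \<open>The (unique, for u > 0) stationary distribution.\<close>
definition pi_MSS :: "('g::finite event \<Rightarrow> real) \<Rightarrow> real \<Rightarrow> real \<Rightarrow> 'g state \<Rightarrow> real" where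
  "pi_MSS p u \<nu> = (THE \<pi>. is_stationary p u \<nu> \<pi>)"

definition pi_RMC :: "('g::finite event \<Rightarrow> real) \<Rightarrow> real \<Rightarrow> 'g state \<Rightarrow> real" where
  "pi_RMC p \<nu> x = Lim (at_right 0)
     (\<lambda>u. pi_MSS p u \<nu> x / (1 - pi_MSS p u \<nu> all_zero - pi_MSS p u \<nu> all_one))"

end

theory Submission
  imports Defs "HOL-Library.FuncSet"
begin

definition act :: "('s::finite \<Rightarrow> 's \<Rightarrow> real) \<Rightarrow> 's set \<Rightarrow> ('s \<Rightarrow> real) \<Rightarrow> 's \<Rightarrow> real" where
  "act K B v = (\<lambda>y. \<Sum>x\<in>B. v x * K x y)"

fun Qk :: "('s::finite \<Rightarrow> 's \<Rightarrow> real) \<Rightarrow> 's set \<Rightarrow> nat \<Rightarrow> 's \<Rightarrow> 's \<Rightarrow> real" where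
  "Qk K B 0 x y = (if x = y then 1 else 0)"
| "Qk K B (Suc k) x y = (\<Sum>z\<in>B. K x z * Qk K B k z y)"

definition Sk :: "('s::finite \<Rightarrow> 's \<Rightarrow> real) \<Rightarrow> 's set \<Rightarrow> nat \<Rightarrow> 's \<Rightarrow> real" where
  "Sk K B k x = (\<Sum>y\<in>B. Qk K B k x y)"

fun chain :: "('s \<Rightarrow> 's \<Rightarrow> real) \<Rightarrow> real \<Rightarrow> 's \<Rightarrow> 's list \<Rightarrow> bool" where
  "chain K c z [] = True"
| "chain K c z (y # ys) = (c \<le> K z y \<and> chain K c y ys)"

definition n1 :: "'s set \<Rightarrow> ('s \<Rightarrow> real) \<Rightarrow> real" where
  "n1 B v = (\<Sum>y\<in>B. \<bar>v y\<bar>)"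

locale kern =
  fixes K :: "'s::finite \<Rightarrow> 's \<Rightarrow> real"
  assumes K_nonneg: "\<And>x y. 0 \<le> K x y"
    and K_row: "\<And>x. (\<Sum>y\<in>UNIV. K x y) \<le> 1"
begin

lemma Qk_nonneg: "0 \<le> Qk K B k x y"
  by (induction k arbitrary: x) (auto intro!: sum_nonneg mult_nonneg_nonneg K_nonneg)

lemma K_rowB: "(\<Sum>y\<in>B. K x y) \<le> 1"
proof -
  have "(\<Sum>y\<in>B. K x y) \<le> (\<Sum>y\<in>UNIV. K x y)"
    by (rule sum_mono2) (auto simp: K_nonneg)
  then show ?thesis using K_row[of x] by linarith
qed

lemma Sk_Suc: "Sk K B (Suc k) x = (\<Sum>z\<in>B. K x z * Sk K B k z)"
proof -
  have "Sk K B (Suc k) x = (\<Sum>y\<in>B. \<Sum>z\<in>B. K x z * Qk K B k z y)"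
    unfolding Sk_def by simp
  also have "\<dots> = (\<Sum>z\<in>B. \<Sum>y\<in>B. K x z * Qk K B k z y)" by (rule sum.swap)
  also have "\<dots> = (\<Sum>z\<in>B. K x z * Sk K B k z)" unfolding Sk_def by (simp add: sum_distrib_left)
  finally show ?thesis .
qed

lemma Sk_nonneg: "0 \<le> Sk K B k x"
  unfolding Sk_def by (auto intro!: sum_nonneg Qk_nonneg)

lemma Sk_le1: "Sk K B k x \<le> 1"
proof (induction k arbitrary: x)
  case 0
  then show ?case by (simp add: Sk_def)
next
  case (Suc k)
  have "Sk K B (Suc k) x = (\<Sum>z\<in>B. K x z * Sk K B k z)" by (rule Sk_Suc)
  also have "\<dots> \<le> (\<Sum>z\<in>B. K x z)"
    by (rule sum_mono) (simp add: K_nonneg Suc mult_left_le)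
  also have "\<dots> \<le> 1" by (rule K_rowB)
  finally show ?case .
qed

lemma chain_bound:
  assumes "0 < c" "c \<le> 1" "chain K c z ys" "\<exists>y\<in>set ys. y \<notin> B" "length ys \<le> k"
  shows "Sk K B k z \<le> 1 - c ^ length ys"
  using assms(3-5)
proof (induction ys arbitrary: z k)
  case Nil
  then show ?case by simp
next
  case (Cons y ys)
  obtain k' where k: "k = Suc k'" using Cons.prems(3) by (cases k) auto
  have cy: "c \<le> K z y" and ch: "chain K c y ys" using Cons.prems(1) by auto
  have cpow: "0 \<le> c ^ length ys" "c ^ length ys \<le> 1"
    using assms(1,2) by (auto intro: power_le_one)
  have Sk: "Sk K B k z = (\<Sum>z'\<in>B. K z z' * Sk K B k' z')" using k Sk_Suc by simp
  show ?case
  proof (cases "y \<in> B")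
    case False
    have "(\<Sum>z'\<in>B. K z z' * Sk K B k' z') \<le> (\<Sum>z'\<in>B. K z z')"
      by (rule sum_mono) (simp add: K_nonneg Sk_le1 mult_left_le)
    moreover have "(\<Sum>z'\<in>B. K z z') + K z y = (\<Sum>z'\<in>insert y B. K z z')"
      using False by simp
    moreover have "(\<Sum>z'\<in>insert y B. K z z') \<le> 1" by (rule K_rowB)
    moreover have "c * c ^ length ys \<le> c" using cpow assms(1) by (simp add: mult_left_le)
    ultimately show ?thesis using Sk cy by simp
  next
    case True
    then have ex: "\<exists>y\<in>set ys. y \<notin> B" using Cons.prems(2) by auto
    have IH: "Sk K B k' y \<le> 1 - c ^ length ys"
      using Cons.IH[OF ch ex] Cons.prems(3) k by simp
    have "(\<Sum>z'\<in>B. K z z' * Sk K B k' z') = K z y * Sk K B k' y + (\<Sum>z'\<in>B-{y}. K z z' * Sk K B k' z')"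
      using sum.remove[OF finite True, of "\<lambda>z'. K z z' * Sk K B k' z'"] by simp
    also have "\<dots> \<le> K z y * (1 - c ^ length ys) + (\<Sum>z'\<in>B-{y}. K z z')"
      apply (rule add_mono)
       apply (rule mult_left_mono[OF IH K_nonneg])
      apply (rule sum_mono) by (simp add: K_nonneg Sk_le1 mult_left_le)
    also have "\<dots> = (\<Sum>z'\<in>B. K z z') - K z y * c ^ length ys"
      using sum.remove[OF finite True, of "K z"] by (simp add: right_diff_distrib)
    also have "\<dots> \<le> 1 - c * c ^ length ys"
      using K_rowB[of z B] mult_right_mono[OF cy cpow(1)] by linarith
    finally show ?thesis using Sk by simp
  qed
qed

lemma act_pow: "y \<in> B \<Longrightarrow> (act K B ^^ k) v y = (\<Sum>x\<in>B. v x * Qk K B k x y)"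
proof (induction k arbitrary: v)
  case 0
  then show ?case by (simp add: if_distrib cong: if_cong)
next
  case (Suc k)
  have "(act K B ^^ Suc k) v y = (act K B ^^ k) (act K B v) y"
    by (simp only: funpow_Suc_right comp_apply)
  also have "\<dots> = (\<Sum>x\<in>B. act K B v x * Qk K B k x y)" using Suc by simp
  also have "\<dots> = (\<Sum>x\<in>B. \<Sum>z\<in>B. v z * K z x * Qk K B k x y)"
    by (simp add: act_def sum_distrib_right)
  also have "\<dots> = (\<Sum>z\<in>B. \<Sum>x\<in>B. v z * K z x * Qk K B k x y)"
    by (rule sum.swap)
  also have "\<dots> = (\<Sum>z\<in>B. v z * Qk K B (Suc k) z y)"
    by (simp only: Qk.simps sum_distrib_left mult.assoc)
  finally show ?case .
qed

lemma n1_act_pow: "n1 B ((act K B ^^ k) v) \<le> (\<Sum>x\<in>B. \<bar>v x\<bar> * Sk K B k x)"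
proof -
  have "n1 B ((act K B ^^ k) v) = (\<Sum>y\<in>B. \<bar>\<Sum>x\<in>B. v x * Qk K B k x y\<bar>)"
    unfolding n1_def by (rule sum.cong) (auto simp: act_pow)
  also have "\<dots> \<le> (\<Sum>y\<in>B. \<Sum>x\<in>B. \<bar>v x\<bar> * Qk K B k x y)"
    apply (rule sum_mono)
    apply (rule order_trans[OF sum_abs])
    by (simp add: abs_mult Qk_nonneg)
  also have "\<dots> = (\<Sum>x\<in>B. \<bar>v x\<bar> * Sk K B k x)"
    by (subst sum.swap) (simp add: Sk_def sum_distrib_left)
  finally show ?thesis .
qed

lemma n1_act_pow_le: "n1 B ((act K B ^^ k) v) \<le> n1 B v"
proof -
  have "(\<Sum>x\<in>B. \<bar>v x\<bar> * Sk K B k x) \<le> (\<Sum>x\<in>B. \<bar>v x\<bar>)"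
    by (rule sum_mono) (simp add: Sk_le1 mult_left_le)
  then show ?thesis using n1_act_pow[of B k v] unfolding n1_def by linarith
qed

lemma act_add: "act K B (\<lambda>x. v x + w x) = (\<lambda>y. act K B v y + act K B w y)"
  by (simp add: act_def algebra_simps sum.distrib)

lemma act_pow_add: "(act K B ^^ k) (\<lambda>x. v x + w x) = (\<lambda>y. (act K B ^^ k) v y + (act K B ^^ k) w y)"
  by (induction k) (simp_all add: act_add)

lemma stab:
  assumes dpos: "0 < \<delta>" and SM: "\<forall>x\<in>B. Sk K B M x \<le> 1 - \<delta>"
  shows "\<delta> * n1 B e \<le> real M * n1 B (\<lambda>y. e y - act K B e y)"
proof -
  define d where "d = (\<lambda>y. e y - act K B e y)"
  have eB: "e = (\<lambda>y. d y + act K B e y)" by (simp add: d_def)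
  have dec: "\<forall>y\<in>B. e y = (\<Sum>j<k. (act K B ^^ j) d y) + (act K B ^^ k) e y" for k
  proof (induction k)
    case 0
    then show ?case by simp
  next
    case (Suc k)
    have E1: "(act K B ^^ k) e = (act K B ^^ k) (\<lambda>y. d y + act K B e y)" using eB by (rule arg_cong)
    have E2: "(act K B ^^ k) (\<lambda>y. d y + act K B e y) = (\<lambda>y. (act K B ^^ k) d y + (act K B ^^ k) (act K B e) y)"
      by (rule act_pow_add)
    have E3: "(act K B ^^ Suc k) e = (act K B ^^ k) (act K B e)"
      by (simp only: funpow_Suc_right comp_def)
    show ?case
    proof
      fix y assume y: "y \<in> B"
      have A0: "(act K B ^^ k) e y = (act K B ^^ k) d y + (act K B ^^ k) (act K B e) y"
        using fun_cong[OF trans[OF E1 E2], of y] by simp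
      have A1: "(act K B ^^ Suc k) e y = (act K B ^^ k) (act K B e) y"
        using fun_cong[OF E3, of y] by simp
      have A: "(act K B ^^ k) e y = (act K B ^^ k) d y + (act K B ^^ Suc k) e y"
        using A0 A1 by linarith
      have I: "e y = (\<Sum>j<k. (act K B ^^ j) d y) + (act K B ^^ k) e y" using Suc.IH y by blast
      have S: "(\<Sum>j<Suc k. (act K B ^^ j) d y) = (\<Sum>j<k. (act K B ^^ j) d y) + (act K B ^^ k) d y"
        by (rule sum.lessThan_Suc)
      show "e y = (\<Sum>j<Suc k. (act K B ^^ j) d y) + (act K B ^^ Suc k) e y"
        using A I S by linarith
    qed
  qed
  have "n1 B e \<le> (\<Sum>j<M. n1 B ((act K B ^^ j) d)) + n1 B ((act K B ^^ M) e)"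
  proof -
    have "n1 B e = (\<Sum>y\<in>B. \<bar>(\<Sum>j<M. (act K B ^^ j) d y) + (act K B ^^ M) e y\<bar>)"
      unfolding n1_def using dec[of M] by (intro sum.cong) auto
    also have "\<dots> \<le> (\<Sum>y\<in>B. (\<Sum>j<M. \<bar>(act K B ^^ j) d y\<bar>) + \<bar>(act K B ^^ M) e y\<bar>)"
      by (intro sum_mono order_trans[OF abs_triangle_ineq] add_mono sum_abs) auto
    also have "\<dots> = (\<Sum>j<M. n1 B ((act K B ^^ j) d)) + n1 B ((act K B ^^ M) e)"
      unfolding n1_def by (simp only: sum.distrib) (subst sum.swap, rule refl)
    finally show ?thesis .
  qed
  also have "\<dots> \<le> (\<Sum>j<M. n1 B d) + (1 - \<delta>) * n1 B e"
  proof (rule add_mono)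
    show "(\<Sum>j<M. n1 B ((act K B ^^ j) d)) \<le> (\<Sum>j<M. n1 B d)"
      by (rule sum_mono) (rule n1_act_pow_le)
    have "(\<Sum>x\<in>B. \<bar>e x\<bar> * Sk K B M x) \<le> (\<Sum>x\<in>B. \<bar>e x\<bar> * (1 - \<delta>))"
      by (rule sum_mono) (use SM in \<open>auto intro: mult_left_mono\<close>)
    moreover have "(\<Sum>x\<in>B. \<bar>e x\<bar> * (1 - \<delta>)) = (1 - \<delta>) * (\<Sum>x\<in>B. \<bar>e x\<bar>)"
      by (simp add: sum_distrib_left mult.commute)
    ultimately show "n1 B ((act K B ^^ M) e) \<le> (1 - \<delta>) * n1 B e"
      using n1_act_pow[of B M e] unfolding n1_def by linarith
  qed
  finally have fin: "n1 B e \<le> real M * n1 B d + (1 - \<delta>) * n1 B e" by simp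
  have "(1 - \<delta>) * n1 B e = n1 B e - \<delta> * n1 B e" by (simp add: left_diff_distrib)
  then have "\<delta> * n1 B e \<le> real M * n1 B d" using fin by linarith
  then show ?thesis by (simp add: d_def)
qed

lemma n1_zero:
  assumes dpos: "0 < \<delta>" and SM: "\<forall>x\<in>B. Sk K B M x \<le> 1 - \<delta>"
    and fx: "\<forall>y\<in>B. e y = act K B e y"
  shows "\<forall>y\<in>B. e y = 0"
proof -
  have "n1 B (\<lambda>y. e y - act K B e y) = 0" unfolding n1_def using fx by simp
  then have "\<delta> * n1 B e \<le> 0" using stab[OF dpos SM, of e] by simp
  then have "n1 B e \<le> 0" using dpos by (simp add: mult_le_0_iff)
  moreover have "n1 B e \<ge> 0" unfolding n1_def by (simp add: sum_nonneg)
  ultimately have "(\<Sum>y\<in>B. \<bar>e y\<bar>) = 0" unfolding n1_def by simp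
  then show ?thesis by (simp add: sum_nonneg_eq_0_iff)
qed

lemma solve:
  assumes dpos: "0 < \<delta>" and SM: "\<forall>x\<in>B. Sk K B M x \<le> 1 - \<delta>"
  shows "\<exists>e. \<forall>y\<in>B. e y = d y + act K B e y"
proof -
  define F :: "real^'s \<Rightarrow> real^'s" where
    "F = (\<lambda>v. \<chi> y. if y \<in> B then v$y - (\<Sum>x\<in>B. v$x * K x y) else v$y)"
  have lin: "linear F"
  proof (rule linearI)
    fix a b :: "real^'s"
    show "F (a + b) = F a + F b"
      unfolding F_def vec_eq_iff by (simp add: sum.distrib distrib_right)
  next
    fix r :: real and a :: "real^'s"
    show "F (r *\<^sub>R a) = r *\<^sub>R F a"
      unfolding F_def vec_eq_iff by (simp add: sum_distrib_left mult.assoc right_diff_distrib)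
  qed
  have "inj F"
  proof (subst linear_injective_0[OF lin], intro allI impI)
    fix v assume F0: "F v = 0"
    have "\<forall>y\<in>B. (\<lambda>x. v$x) y = act K B (\<lambda>x. v$x) y"
    proof
      fix y assume "y \<in> B"
      then have "F v $ y = v$y - (\<Sum>x\<in>B. v$x * K x y)" by (simp add: F_def)
      then show "(\<lambda>x. v$x) y = act K B (\<lambda>x. v$x) y" using F0 by (simp add: act_def)
    qed
    from n1_zero[OF dpos SM this] have B0: "\<forall>y\<in>B. v$y = 0" by simp
    show "v = 0"
    proof (rule vec_eq_iff[THEN iffD2], rule allI)
      fix y show "v$y = 0$y"
      proof (cases "y \<in> B")
        case True then show ?thesis using B0 by simp
      next
        case False
        then have "F v $ y = v$y" by (simp add: F_def)
        then show ?thesis using F0 by simp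
      qed
    qed
  qed
  then have "surj F" using lin by (rule linear_inj_imp_surj[rotated])
  then obtain v where v: "F v = (\<chi> y. d y)" by (metis surjE)
  show ?thesis
  proof (intro exI ballI)
    fix y assume "y \<in> B"
    then have "F v $ y = v$y - (\<Sum>x\<in>B. v$x * K x y)" by (simp add: F_def)
    then show "v$y = d y + act K B (\<lambda>x. v$x) y" using v by (simp add: act_def)
  qed
qed

lemma pos:
  assumes dpos: "0 < \<delta>" and SM: "\<forall>x\<in>B. Sk K B M x \<le> 1 - \<delta>"
    and eq: "\<forall>y\<in>B. e y = d y + act K B e y" and dn: "\<forall>y\<in>B. 0 \<le> d y"
  shows "\<forall>y\<in>B. 0 \<le> e y"
proof -
  define n where "n = (\<lambda>x. max (- e x) 0)"
  have nn: "0 \<le> n x" for x by (simp add: n_def)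
  have actn: "0 \<le> act K B n y" for y
    unfolding act_def by (auto intro!: sum_nonneg mult_nonneg_nonneg nn K_nonneg)
  have le: "n y \<le> act K B n y" if "y \<in> B" for y
  proof -
    have e1: "e y = d y + act K B e y" using eq that by blast
    have d1: "0 \<le> d y" using dn that by blast
    have "- e y \<le> - act K B e y" using e1 d1 by linarith
    also have "\<dots> = (\<Sum>x\<in>B. (- e x) * K x y)" by (simp add: act_def sum_negf)
    also have "\<dots> \<le> act K B n y" unfolding act_def
      apply (rule sum_mono)
      subgoal for x using mult_right_mono[of "- e x" "max (- e x) 0" "K x y"] K_nonneg[of x y]
        by (simp add: n_def)
      done
    finally show ?thesis using actn by (simp add: n_def)
  qed
  have "(\<Sum>y\<in>B. act K B n y) = (\<Sum>x\<in>B. n x * (\<Sum>y\<in>B. K x y))"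
    unfolding act_def by (subst sum.swap) (simp add: sum_distrib_left)
  also have "\<dots> \<le> (\<Sum>x\<in>B. n x)"
    by (rule sum_mono) (simp add: K_rowB mult_left_le nn)
  finally have "(\<Sum>y\<in>B. act K B n y - n y) \<le> 0" by (simp add: sum_subtractf)
  moreover have "\<forall>y\<in>B. 0 \<le> act K B n y - n y" using le by simp
  ultimately have "(\<Sum>y\<in>B. act K B n y - n y) = 0" by (meson antisym sum_nonneg)
  then have "\<forall>y\<in>B. act K B n y - n y = 0"
    using sum_nonneg_eq_0_iff[of B "\<lambda>y. act K B n y - n y"] le by simp
  then have "\<forall>y\<in>B. n y = act K B n y" by simp
  from n1_zero[OF dpos SM this] show ?thesis by (auto simp: n_def)
qed

end



lemma site_prob_nonneg:
  assumes "0 \<le> u" "u \<le> 1" "0 \<le> \<nu>" "\<nu> \<le> 1"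
  shows "0 \<le> site_prob u \<nu> x \<alpha> g b"
  using assms unfolding site_prob_def by (auto intro!: add_nonneg_nonneg mult_nonneg_nonneg)

lemma rr_nonneg: "replacement_rule p \<Longrightarrow> 0 \<le> p e"
  unfolding replacement_rule_def by (cases e) auto

lemma rr_sum: "replacement_rule p \<Longrightarrow> (\<Sum>e\<in>UNIV. p e) = 1"
  unfolding replacement_rule_def by auto

lemma trans_term_nonneg:
  assumes "0 \<le> u" "u \<le> 1" "0 \<le> \<nu>" "\<nu> \<le> 1"
  shows "0 \<le> (\<Prod>g\<in>UNIV. if g \<in> fst e then site_prob u \<nu> x (snd e) g (y g)
                    else (if y g = x g then 1 else 0::real))"
  by (rule prod_nonneg) (auto intro: site_prob_nonneg[OF assms])

lemma trans_nonneg: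
  assumes "replacement_rule p" "0 \<le> u" "u \<le> 1" "0 \<le> \<nu>" "\<nu> \<le> 1"
  shows "0 \<le> trans_prob p u \<nu> x y"
  unfolding trans_prob_def
  by (rule sum_nonneg, rule mult_nonneg_nonneg[OF rr_nonneg[OF assms(1)] trans_term_nonneg[OF assms(2-5)]])

lemma sum_prod_bool:
  fixes f :: "'g::finite \<Rightarrow> bool \<Rightarrow> real"
  shows "(\<Sum>y\<in>UNIV. \<Prod>g\<in>UNIV. f g (y g)) = (\<Prod>g\<in>UNIV. f g True + f g False)"
proof -
  have P: "PiE (UNIV::'g set) (\<lambda>_. UNIV::bool set) = UNIV" by (auto simp: PiE_def extensional_def)
  have "(\<Prod>g\<in>UNIV. f g True + f g False) = (\<Prod>g\<in>UNIV. \<Sum>b\<in>UNIV. f g b)"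
    by (simp add: UNIV_bool add.commute)
  also have "\<dots> = (\<Sum>y\<in>PiE UNIV (\<lambda>_. UNIV). \<Prod>g\<in>UNIV. f g (y g))"
    by (rule prod_sum_PiE) auto
  finally show ?thesis using P by simp
qed

lemma trans_rowsum:
  assumes "replacement_rule p"
  shows "(\<Sum>y\<in>UNIV. trans_prob p u \<nu> x y) = 1"
proof -
  have "(\<Sum>y\<in>UNIV. trans_prob p u \<nu> x y) =
     (\<Sum>e\<in>UNIV. p e * (\<Sum>y\<in>UNIV. \<Prod>g\<in>UNIV. if g \<in> fst e then site_prob u \<nu> x (snd e) g (y g)
                    else (if y g = x g then 1 else 0)))"
    unfolding trans_prob_def by (subst sum.swap) (simp add: sum_distrib_left)
  also have "\<dots> = (\<Sum>e\<in>UNIV. p e)"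
  proof (rule sum.cong[OF refl])
    fix e :: "'a event"
    have "(\<Sum>y\<in>UNIV. \<Prod>g\<in>UNIV. if g \<in> fst e then site_prob u \<nu> x (snd e) g (y g)
                    else (if y g = x g then 1 else 0)) = (\<Prod>g\<in>(UNIV::'a set). 1::real)"
      apply (subst sum_prod_bool[where f = "\<lambda>g b. if g \<in> fst e then site_prob u \<nu> x (snd e) g b
                    else (if b = x g then 1 else 0)"])
      apply (rule prod.cong[OF refl])
      by (auto simp: site_prob_def algebra_simps)
    then show "p e * (\<Sum>y\<in>UNIV. \<Prod>g\<in>UNIV. if g \<in> fst e then site_prob u \<nu> x (snd e) g (y g)
                    else (if y g = x g then 1 else 0)) = p e" by simp
  qed
  also have "\<dots> = 1" using rr_sum[OF assms] .
  finally show ?thesis .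
qed

lemma trans_le1:
  assumes "replacement_rule p" "0 \<le> u" "u \<le> 1" "0 \<le> \<nu>" "\<nu> \<le> 1"
  shows "trans_prob p u \<nu> x y \<le> 1"
proof -
  have "trans_prob p u \<nu> x y \<le> (\<Sum>y\<in>UNIV. trans_prob p u \<nu> x y)"
    by (rule member_le_sum) (auto intro: trans_nonneg[OF assms])
  then show ?thesis using trans_rowsum[OF assms(1)] by simp
qed

lemma trans_compl:
  "trans_prob p u \<nu> (complement_state x) (complement_state y) = trans_prob p u (1 - \<nu>) x y"
  unfolding trans_prob_def complement_state_def
  by (intro sum.cong refl arg_cong2[where f="(*)"] prod.cong) (auto simp: site_prob_def)

lemma site_u0: "site_prob 0 \<nu> x \<alpha> g b = site_prob 0 \<nu>' x \<alpha> g b"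
  by (simp add: site_prob_def)

lemma trans_u0: "trans_prob p 0 \<nu> x y = trans_prob p 0 \<nu>' x y"
  unfolding trans_prob_def by (subst site_u0[of \<nu> _ _ _ _ \<nu>']) (rule refl)

lemma trans_ge_term:
  assumes "replacement_rule p" "0 \<le> u" "u \<le> 1" "0 \<le> \<nu>" "\<nu> \<le> 1"
  shows "p e * (\<Prod>g\<in>UNIV. if g \<in> fst e then site_prob u \<nu> x (snd e) g (y g)
                    else (if y g = x g then 1 else 0)) \<le> trans_prob p u \<nu> x y"
  unfolding trans_prob_def
  by (rule member_le_sum[where f = "\<lambda>e. p e * (\<Prod>g\<in>UNIV. if g \<in> fst e then site_prob u \<nu> x (snd e) g (y g)
                    else (if y g = x g then 1 else 0))"])
     (auto intro!: mult_nonneg_nonneg rr_nonneg[OF assms(1)] trans_term_nonneg[OF assms(2-5)])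

lemma trans_nomut:
  assumes "replacement_rule p" "0 \<le> u" "u \<le> 1" "0 \<le> \<nu>" "\<nu> \<le> 1"
  shows "p e * (1 - u) ^ CARD('g::finite) \<le> trans_prob p u \<nu> (z::'g state) (z \<circ> extend_event e)"
proof -
  have "(\<Prod>g\<in>(UNIV::'g set). 1 - u) \<le> (\<Prod>g\<in>UNIV. if g \<in> fst e then site_prob u \<nu> z (snd e) g ((z \<circ> extend_event e) g)
                    else (if (z \<circ> extend_event e) g = z g then 1 else 0))"
    apply (rule prod_mono)
    using assms by (auto simp: site_prob_def extend_event_def intro!: mult_nonneg_nonneg)
  then have "p e * (1 - u) ^ CARD('g) \<le> p e * (\<Prod>g\<in>UNIV. if g \<in> fst e then site_prob u \<nu> z (snd e) g ((z \<circ> extend_event e) g)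
                    else (if (z \<circ> extend_event e) g = z g then 1 else 0))"
    by (simp add: mult_left_mono rr_nonneg[OF assms(1)])
  then show ?thesis using trans_ge_term[OF assms, of e z "z \<circ> extend_event e"] by linarith
qed

definition mut0 :: "'g event \<Rightarrow> 'g state \<Rightarrow> 'g state" where
  "mut0 e z = (\<lambda>h. if h \<in> fst e then False else z h)"

lemma trans_mut0:
  assumes "replacement_rule p" "0 \<le> u" "u \<le> 1" "0 \<le> \<nu>" "\<nu> \<le> 1"
  shows "p e * (u * (1 - \<nu>)) ^ CARD('g::finite) \<le> trans_prob p u \<nu> (z::'g state) (mut0 e z)"
proof -
  have "(\<Prod>g\<in>(UNIV::'g set). u * (1 - \<nu>)) \<le> (\<Prod>g\<in>UNIV. if g \<in> fst e then site_prob u \<nu> z (snd e) g (mut0 e z g)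
                    else (if mut0 e z g = z g then 1 else 0))"
    apply (rule prod_mono)
    using assms by (auto simp: site_prob_def mut0_def intro!: mult_nonneg_nonneg mult_le_one)
  then have "p e * (u * (1 - \<nu>)) ^ CARD('g) \<le> p e * (\<Prod>g\<in>UNIV. if g \<in> fst e then site_prob u \<nu> z (snd e) g (mut0 e z g)
                    else (if mut0 e z g = z g then 1 else 0))"
    by (simp add: mult_left_mono rr_nonneg[OF assms(1)])
  then show ?thesis using trans_ge_term[OF assms, of e z "mut0 e z"] by linarith
qed

lemma trans_cont: "isCont (\<lambda>u. trans_prob p u \<nu> x y) u0"
  unfolding trans_prob_def site_prob_def
  apply (intro continuous_intros)
  subgoal for e g
    by (cases "g \<in> fst e"; cases "y g = x (snd e g)"; cases "y g"; cases "y g = x g")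
       (simp_all add: continuous_intros)
  done



definition mm :: "('g::finite event \<Rightarrow> real) \<Rightarrow> 'g state \<Rightarrow> real" where
  "mm p y = (\<Sum>e\<in>UNIV. p e * (if card {g. y g} = 1 \<and> {g. y g} \<subseteq> fst e then 1 else 0))"

definition GG :: "('g::finite event \<Rightarrow> real) \<Rightarrow> real \<Rightarrow> 'g state \<Rightarrow> real \<Rightarrow> real" where
  "GG p \<nu> y u = (\<Sum>e\<in>UNIV. p e * ((if {g. y g} \<subseteq> fst e then 1 else 0) * (\<nu> * (u*\<nu>) ^ (card {g. y g} - 1))
       * (\<Prod>g\<in>-{g. y g}. 1 - (if g \<in> fst e then 1 else 0) * (u*\<nu>))))"

lemma prod_fac:
  fixes y :: "'g::finite state"
  assumes Y: "Y = {g. y g}" and ne: "Y \<noteq> {}"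
  shows "(\<Prod>g\<in>UNIV. if g \<in> R then site_prob u \<nu> all_zero \<alpha> g (y g) else (if y g = all_zero g then 1 else 0))
     = u * ((if Y \<subseteq> R then 1 else 0) * (\<nu> * (u*\<nu>) ^ (card Y - 1)) * (\<Prod>g\<in>-Y. 1 - (if g \<in> R then 1 else 0) * (u*\<nu>)))"
proof -
  have "(\<Prod>g\<in>UNIV. if g \<in> R then site_prob u \<nu> all_zero \<alpha> g (y g) else (if y g = all_zero g then 1 else 0))
      = (\<Prod>g\<in>UNIV. if y g then (if g \<in> R then 1 else 0) * (u*\<nu>) else 1 - (if g \<in> R then 1 else 0) * (u*\<nu>))"
    by (rule prod.cong) (auto simp: site_prob_def all_zero_def algebra_simps)
  also have "\<dots> = (\<Prod>g\<in>Y. (if g \<in> R then 1 else 0) * (u*\<nu>)) * (\<Prod>g\<in>-Y. 1 - (if g \<in> R then 1 else 0) * (u*\<nu>))"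
    by (simp add: prod.If_cases Y)
  also have "(\<Prod>g\<in>Y. (if g \<in> R then 1 else 0) * (u*\<nu>)) = (if Y \<subseteq> R then 1 else 0) * (u*\<nu>) ^ card Y"
  proof (cases "Y \<subseteq> R")
    case True
    then have "(\<Prod>g\<in>Y. (if g \<in> R then 1 else 0) * (u*\<nu>)) = (\<Prod>g\<in>Y. u*\<nu>)"
      by (intro prod.cong) auto
    then show ?thesis using True by simp
  next
    case False
    then obtain g where "g \<in> Y" "g \<notin> R" by blast
    then show ?thesis using False by (intro trans[OF prod_zero]) auto
  qed
  also have "(u*\<nu>) ^ card Y = u * (\<nu> * (u*\<nu>) ^ (card Y - 1))"
  proof -
    have "card Y \<ge> 1" using ne by (simp add: Suc_le_eq card_gt_0_iff)
    then obtain n where "card Y = Suc n" by (cases "card Y") auto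
    then show ?thesis by simp
  qed
  finally show ?thesis by (simp add: mult.assoc mult.left_commute)
qed

lemma trans_a_eq:
  fixes y :: "'g::finite state"
  assumes "y \<noteq> all_zero"
  shows "trans_prob p u \<nu> all_zero y = u * GG p \<nu> y u"
proof -
  have ne: "{g. y g} \<noteq> {}" using assms by (auto simp: all_zero_def)
  show ?thesis
    unfolding trans_prob_def GG_def sum_distrib_left
    by (rule sum.cong[OF refl]) (simp add: prod_fac[OF refl ne] mult.left_commute)
qed

lemma GG_cont: "isCont (GG p \<nu> y) t"
  unfolding GG_def by (intro continuous_intros)

lemma GG_0:
  assumes "y \<noteq> all_zero"
  shows "GG p \<nu> y 0 = \<nu> * mm p y"
proof -
  have ne: "card {g. y g} \<ge> 1" using assms by (auto simp: all_zero_def Suc_le_eq card_gt_0_iff)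
  show ?thesis
    unfolding GG_def mm_def sum_distrib_left
    apply (rule sum.cong[OF refl])
    using ne by (auto simp: power_0_left)
qed

lemma eventually_pos: "\<forall>\<^sub>F u in at_right (0::real). 0 < u"
  by (simp add: eventually_at_right_less)

lemma trans_a_lim:
  fixes y :: "'g::finite state"
  assumes "y \<noteq> all_zero"
  shows "((\<lambda>u. trans_prob p u \<nu> all_zero y / u) \<longlongrightarrow> \<nu> * mm p y) (at_right 0)"
proof -
  have "(GG p \<nu> y \<longlongrightarrow> GG p \<nu> y 0) (at_right 0)"
    using tendsto_mono[OF at_within_le_at GG_cont[where t=0, unfolded isCont_def]] .
  then have lim: "(GG p \<nu> y \<longlongrightarrow> \<nu> * mm p y) (at_right 0)" using GG_0[OF assms] by simp
  have ev: "\<forall>\<^sub>F u in at_right 0. GG p \<nu> y u = trans_prob p u \<nu> all_zero y / u"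
    using eventually_pos by eventually_elim (simp add: trans_a_eq[OF assms])
  show ?thesis using tendsto_cong[OF ev] lim by blast
qed

lemma compl_compl[simp]: "complement_state (complement_state x) = x"
  by (simp add: complement_state_def)

lemma compl_zero[simp]: "complement_state all_zero = all_one" "complement_state all_one = all_zero"
  by (auto simp: complement_state_def all_zero_def all_one_def)

lemma compl_eq_iff[simp]: "complement_state x = complement_state y \<longleftrightarrow> x = y"
  by (metis compl_compl)

lemma trans_A_lim:
  fixes y :: "'g::finite state"
  assumes "y \<noteq> all_one"
  shows "((\<lambda>u. trans_prob p u \<nu> all_one y / u) \<longlongrightarrow> (1 - \<nu>) * mm p (complement_state y)) (at_right 0)"
proof -
  have "complement_state y \<noteq> all_zero" using assms compl_eq_iff[of y all_one] by auto
  from trans_a_lim[OF this, of p "1 - \<nu>"] show ?thesis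
    using trans_compl[of p _ \<nu> all_zero "complement_state y"] by simp
qed

lemma mm_one: "CARD('g::finite) \<ge> 2 \<Longrightarrow> mm p (all_one :: 'g state) = 0"
  by (simp add: mm_def all_one_def)

lemma mm_nonneg: "replacement_rule p \<Longrightarrow> 0 \<le> mm p y"
  unfolding mm_def by (rule sum_nonneg) (simp add: rr_nonneg)



fun pathN :: "'g state \<Rightarrow> 'g event list \<Rightarrow> 'g state list" where
  "pathN z [] = []"
| "pathN z (e # es) = (z \<circ> extend_event e) # pathN (z \<circ> extend_event e) es"

lemma length_pathN[simp]: "length (pathN z es) = length es"
  by (induction es arbitrary: z) auto

lemma last_pathN: "es \<noteq> [] \<Longrightarrow> last (pathN z es) = z \<circ> foldr (\<circ>) (map extend_event es) id"
proof (induction es arbitrary: z)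
  case Nil then show ?case by simp
next
  case (Cons e es)
  show ?case
  proof (cases "es = []")
    case True then show ?thesis by simp
  next
    case False
    have "pathN z (e # es) = (z \<circ> extend_event e) # pathN (z \<circ> extend_event e) es" by simp
    moreover have "pathN (z \<circ> extend_event e) es \<noteq> []" using False by (cases es) auto
    ultimately have "last (pathN z (e # es)) = last (pathN (z \<circ> extend_event e) es)" by simp
    also have "\<dots> = (z \<circ> extend_event e) \<circ> foldr (\<circ>) (map extend_event es) id"
      by (rule Cons.IH[OF False])
    also have "\<dots> = z \<circ> (extend_event e \<circ> foldr (\<circ>) (map extend_event es) id)"
      by (rule comp_assoc)
    also have "\<dots> = z \<circ> foldr (\<circ>) (map extend_event (e # es)) id"
      by (simp only: list.map(2) foldr_Cons comp_apply)
    finally show ?thesis .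
  qed
qed

lemma chain_pathN: "(\<forall>e\<in>set es. \<forall>w. c \<le> K w (w \<circ> extend_event e)) \<Longrightarrow> chain K c z (pathN z es)"
  by (induction es arbitrary: z) auto

lemma chain_append: "chain K c z (xs @ ys) = (chain K c z xs \<and> chain K c (last (z # xs)) ys)"
  by (induction xs arbitrary: z) auto

definition NN :: "'g state set" where "NN = {z. z \<noteq> all_zero \<and> z \<noteq> all_one}"

lemma kern_trans:
  assumes "replacement_rule p" "0 \<le> u" "u \<le> 1" "0 \<le> \<nu>" "\<nu> \<le> 1"
  shows "kern (trans_prob p u \<nu>)"
  by unfold_locales (auto simp: trans_nonneg[OF assms] trans_rowsum[OF assms(1)])

lemma const_fix:
  assumes "\<forall>h. foldr (\<circ>) (map extend_event es) id h = g"
  shows "z \<circ> foldr (\<circ>) (map extend_event es) id = (\<lambda>h. z g)"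
  using assms by (auto simp: fun_eq_iff)

lemma p_le1: "replacement_rule p \<Longrightarrow> p e \<le> 1"
  using member_le_sum[of e UNIV p] rr_sum[of p] rr_nonneg[of p] by auto

context
  fixes p :: "'g::finite event \<Rightarrow> real" and \<nu> :: real
    and g :: 'g and es :: "'g event list"
  assumes rr: "replacement_rule p"
    and nu0: "0 \<le> \<nu>" and nu1: "\<nu> \<le> 1"
    and es_len: "length es \<ge> 1" and es_pos: "\<forall>e\<in>set es. p e > 0"
    and es_fix: "\<forall>h. foldr (\<circ>) (map extend_event es) id h = g"
    and es_g: "\<exists>e\<in>set es. g \<in> fst e"
begin

definition pmin where "pmin = Min (p ` set es)"
definition c0 where "c0 = pmin * (1/2) ^ CARD('g)"

lemma es_ne: "es \<noteq> []" using es_len by auto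

lemma pmin_pos: "0 < pmin"
  unfolding pmin_def using es_pos es_ne by (subst Min_gr_iff) auto

lemma pmin_le: "e \<in> set es \<Longrightarrow> pmin \<le> p e"
  unfolding pmin_def by (rule Min_le) auto

lemma c0_pos: "0 < c0" unfolding c0_def using pmin_pos by simp

lemma c0_le1: "c0 \<le> 1"
proof -
  obtain e where "e \<in> set es" using es_ne by (cases es) auto
  then have "pmin \<le> 1" using pmin_le p_le1[OF rr] order_trans by blast
  moreover have "(1/2::real) ^ CARD('g) \<le> 1" by (rule power_le_one) auto
  ultimately show ?thesis unfolding c0_def using pmin_pos by (simp add: mult_le_one)
qed

lemma step_nomut:
  assumes "0 \<le> u" "u \<le> 1/2" "e \<in> set es"
  shows "c0 \<le> trans_prob p u \<nu> w (w \<circ> extend_event e)"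
proof -
  have "(1/2::real) ^ CARD('g) \<le> (1 - u) ^ CARD('g)" by (rule power_mono) (use assms in auto)
  then have "c0 \<le> p e * (1 - u) ^ CARD('g)"
    unfolding c0_def using pmin_le[OF assms(3)] pmin_pos
    by (intro mult_mono) auto
  also have "\<dots> \<le> trans_prob p u \<nu> w (w \<circ> extend_event e)"
    by (rule trans_nomut) (use rr nu0 nu1 assms in auto)
  finally show ?thesis .
qed

lemma last_path_const: "last (pathN z es) = (\<lambda>h. z g)"
  using last_pathN[OF es_ne] const_fix[OF es_fix] by simp

lemma stab_N:
  assumes "0 \<le> u" "u \<le> 1/2" "x \<in> NN"
  shows "Sk (trans_prob p u \<nu>) NN (length es) x \<le> 1 - c0 ^ length es"
proof -
  interpret kern "trans_prob p u \<nu>" by (rule kern_trans) (use rr nu0 nu1 assms in auto)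
  have ch: "chain (trans_prob p u \<nu>) c0 x (pathN x es)"
    by (rule chain_pathN) (use step_nomut assms in auto)
  have "last (pathN x es) \<in> set (pathN x es)" using es_ne by (cases es) auto
  moreover have "last (pathN x es) \<notin> NN"
    unfolding last_path_const NN_def all_zero_def all_one_def by (cases "x g") auto
  ultimately have ex: "\<exists>y\<in>set (pathN x es). y \<notin> NN" by blast
  show ?thesis using chain_bound[OF c0_pos c0_le1 ch ex] by simp
qed


definition e0 where "e0 = (SOME e. e \<in> set es \<and> g \<in> fst e)"

lemma e0: "e0 \<in> set es" "g \<in> fst e0"
  using someI_ex[OF es_g[unfolded Bex_def]] unfolding e0_def by auto

definition c1 :: "real \<Rightarrow> real" where "c1 u = min c0 (p e0 * (u * (1 - \<nu>)) ^ CARD('g))"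

abbreviation BB :: "'g state set" where "BB \<equiv> UNIV - {all_zero}"

lemma c1_pos: "0 < u \<Longrightarrow> \<nu> < 1 \<Longrightarrow> 0 < c1 u"
  unfolding c1_def using c0_pos es_pos e0 by auto

lemma c1_le1: "c1 u \<le> 1"
  unfolding c1_def using c0_le1 by linarith

lemma stab_a:
  assumes u0: "0 < u" and u1: "u \<le> 1/2" and nu: "\<nu> < 1" and x: "x \<in> BB"
  shows "Sk (trans_prob p u \<nu>) BB (2 * length es + 1) x \<le> 1 - c1 u ^ (2 * length es + 1)"
proof -
  interpret kern "trans_prob p u \<nu>" by (rule kern_trans) (use rr nu0 nu1 u0 u1 in auto)
  let ?K = "trans_prob p u \<nu>"
  let ?M = "2 * length es + 1"
  have cp: "0 < c1 u" using c1_pos[OF u0 nu] .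
  have cl: "c1 u \<le> 1" by (rule c1_le1)
  have cc0: "c1 u \<le> c0" unfolding c1_def by simp
  have steps: "\<forall>e\<in>set es. \<forall>w. c1 u \<le> ?K w (w \<circ> extend_event e)"
    using step_nomut[of u] u0 u1 cc0 order_trans by fastforce
  have ch1: "chain ?K (c1 u) x (pathN x es)" by (rule chain_pathN[OF steps])
  have lastin: "last (pathN z es) \<in> set (pathN z es)" for z using es_ne by (cases es) auto
  obtain ys where ch: "chain ?K (c1 u) x ys" and ex: "\<exists>y\<in>set ys. y \<notin> BB" and len: "length ys \<le> ?M"
  proof (cases "x g")
    case False
    then have "last (pathN x es) = all_zero" unfolding last_path_const all_zero_def by simp
    then show ?thesis using that[OF ch1] lastin[of x] by auto
  next
    case True
    define z1 where "z1 = mut0 e0 all_one"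
    have l1: "last (pathN x es) = all_one" unfolding last_path_const all_one_def using True by simp
    have "c1 u \<le> p e0 * (u * (1 - \<nu>)) ^ CARD('g)" unfolding c1_def by simp
    also have "\<dots> \<le> ?K all_one z1" unfolding z1_def
      by (rule trans_mut0) (use rr nu0 nu1 u0 u1 in auto)
    finally have st: "c1 u \<le> ?K all_one z1" .
    have ch2: "chain ?K (c1 u) z1 (pathN z1 es)" by (rule chain_pathN[OF steps])
    have "last (x # pathN x es) = all_one" using l1 es_ne by (cases es) auto
    then have chall: "chain ?K (c1 u) x (pathN x es @ z1 # pathN z1 es)"
      using ch1 ch2 st by (simp add: chain_append)
    have "last (pathN z1 es) = all_zero"
      unfolding last_path_const z1_def mut0_def all_zero_def using e0 by simp
    then have "\<exists>y\<in>set (pathN x es @ z1 # pathN z1 es). y \<notin> BB" using lastin[of z1] by auto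
    then show ?thesis using that[OF chall] by simp
  qed
  have "Sk ?K BB ?M x \<le> 1 - c1 u ^ length ys" by (rule chain_bound[OF cp cl ch ex len])
  moreover have "c1 u ^ ?M \<le> c1 u ^ length ys" by (rule power_decreasing[OF len]) (use cp cl in auto)
  ultimately show ?thesis by linarith
qed

lemma sum_split_a: "(\<Sum>y\<in>UNIV. f y) = f all_zero + (\<Sum>y\<in>BB. f y)"
  by (rule sum.remove) auto

lemma act_lin: "act K B (\<lambda>x. a * f x - b * h x) y = a * act K B f y - b * act K B h y"
  unfolding act_def by (simp add: sum_subtractf sum_distrib_left algebra_simps)

lemma stat_ex1:
  assumes u0: "0 < u" and u1: "u \<le> 1/2" and nu: "\<nu> < 1"
  shows "\<exists>!\<pi>. is_stationary p u \<nu> \<pi>"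
proof -
  interpret kern "trans_prob p u \<nu>" by (rule kern_trans) (use rr nu0 nu1 u0 u1 in auto)
  let ?K = "trans_prob p u \<nu>"
  let ?M = "2 * length es + 1"
  define \<delta> where "\<delta> = c1 u ^ ?M"
  have dpos: "0 < \<delta>" unfolding \<delta>_def using c1_pos[OF u0 nu] by simp
  have SM: "\<forall>x\<in>BB. Sk ?K BB ?M x \<le> 1 - \<delta>" unfolding \<delta>_def using stab_a[OF u0 u1 nu] by blast
  have Knn: "0 \<le> ?K x y" for x y by (rule trans_nonneg) (use rr nu0 nu1 u0 u1 in auto)
  have row: "(\<Sum>y\<in>UNIV. ?K x y) = 1" for x by (rule trans_rowsum[OF rr])
  have at_a: "(\<Sum>x\<in>UNIV. \<pi> x * ?K x all_zero) = \<pi> all_zero"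
    if s1: "(\<Sum>x\<in>UNIV. \<pi> x) = 1" and sB: "\<forall>y\<in>BB. (\<Sum>x\<in>UNIV. \<pi> x * ?K x y) = \<pi> y" for \<pi>
  proof -
    have "(\<Sum>y\<in>UNIV. \<Sum>x\<in>UNIV. \<pi> x * ?K x y) = (\<Sum>x\<in>UNIV. \<pi> x * (\<Sum>y\<in>UNIV. ?K x y))"
      by (subst sum.swap) (simp add: sum_distrib_left)
    also have "\<dots> = 1" using s1 row by simp
    finally have A: "(\<Sum>y\<in>UNIV. \<Sum>x\<in>UNIV. \<pi> x * ?K x y) = 1" .
    have "(\<Sum>y\<in>UNIV. \<Sum>x\<in>UNIV. \<pi> x * ?K x y) = (\<Sum>x\<in>UNIV. \<pi> x * ?K x all_zero) + (\<Sum>y\<in>BB. \<pi> y)"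
      using sB by (subst sum_split_a) simp
    moreover have "(\<Sum>y\<in>BB. \<pi> y) = 1 - \<pi> all_zero" using s1 sum_split_a[of \<pi>] by simp
    ultimately show ?thesis using A by linarith
  qed
  have fixeq: "\<forall>y\<in>BB. \<pi> y = \<pi> all_zero * ?K all_zero y + act ?K BB \<pi> y"
    if "is_stationary p u \<nu> \<pi>" for \<pi>
  proof
    fix y assume "y \<in> BB"
    have "\<pi> y = (\<Sum>x\<in>UNIV. \<pi> x * ?K x y)" using that unfolding is_stationary_def by simp
    also have "\<dots> = \<pi> all_zero * ?K all_zero y + act ?K BB \<pi> y"
      unfolding act_def by (rule sum_split_a)
    finally show "\<pi> y = \<pi> all_zero * ?K all_zero y + act ?K BB \<pi> y" .
  qed
  have pa_pos: "0 < \<pi> all_zero" if st: "is_stationary p u \<nu> \<pi>" for \<pi>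
  proof (rule ccontr)
    assume "\<not> 0 < \<pi> all_zero"
    moreover have "0 \<le> \<pi> all_zero" using st unfolding is_stationary_def by simp
    ultimately have z: "\<pi> all_zero = 0" by simp
    then have "\<forall>y\<in>BB. \<pi> y = act ?K BB \<pi> y" using fixeq[OF st] by simp
    from n1_zero[OF dpos SM this] have "\<forall>y\<in>BB. \<pi> y = 0" .
    then have "(\<Sum>y\<in>UNIV. \<pi> y) = 0" using z sum_split_a[of \<pi>] by simp
    then show False using st unfolding is_stationary_def by simp
  qed
  obtain v where v: "\<forall>y\<in>BB. v y = ?K all_zero y + act ?K BB v y"
    using solve[OF dpos SM] by blast
  have vnn: "\<forall>y\<in>BB. 0 \<le> v y" by (rule pos[OF dpos SM v]) (simp add: Knn)
  define Z where "Z = 1 + (\<Sum>y\<in>BB. v y)"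
  have Zpos: "0 < Z" unfolding Z_def using vnn by (smt (verit) sum_nonneg)
  define \<pi> where "\<pi> = (\<lambda>y. (if y = all_zero then 1 else v y) / Z)"
  have \<pi>B: "(\<Sum>y\<in>BB. \<pi> y) = (\<Sum>y\<in>BB. v y) / Z"
    unfolding \<pi>_def by (simp add: sum_divide_distrib)
  have s1: "(\<Sum>x\<in>UNIV. \<pi> x) = 1"
  proof -
    have "(\<Sum>x\<in>UNIV. \<pi> x) = \<pi> all_zero + (\<Sum>y\<in>BB. \<pi> y)" by (rule sum_split_a)
    also have "\<dots> = 1 / Z + (\<Sum>y\<in>BB. v y) / Z" using \<pi>B by (simp add: \<pi>_def)
    also have "\<dots> = (1 + (\<Sum>y\<in>BB. v y)) / Z" by (rule add_divide_distrib[symmetric])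
    also have "\<dots> = 1" using Zpos unfolding Z_def by simp
    finally show ?thesis .
  qed
  have sB: "\<forall>y\<in>BB. (\<Sum>x\<in>UNIV. \<pi> x * ?K x y) = \<pi> y"
  proof
    fix y assume y: "y \<in> BB"
    have "(\<Sum>x\<in>UNIV. \<pi> x * ?K x y) = \<pi> all_zero * ?K all_zero y + (\<Sum>x\<in>BB. \<pi> x * ?K x y)"
      by (rule sum_split_a)
    also have "(\<Sum>x\<in>BB. \<pi> x * ?K x y) = act ?K BB v y / Z"
      unfolding act_def \<pi>_def by (simp add: sum_divide_distrib)
    finally show "(\<Sum>x\<in>UNIV. \<pi> x * ?K x y) = \<pi> y"
      using v y Zpos by (simp add: \<pi>_def add_divide_distrib)
  qed
  have st: "is_stationary p u \<nu> \<pi>"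
    unfolding is_stationary_def
  proof (intro conjI allI)
    fix x show "0 \<le> \<pi> x" unfolding \<pi>_def using vnn Zpos by auto
  next
    show "(\<Sum>x\<in>UNIV. \<pi> x) = 1" by (rule s1)
  next
    fix y show "(\<Sum>x\<in>UNIV. \<pi> x * ?K x y) = \<pi> y"
    proof (cases "y = all_zero")
      case True then show ?thesis using at_a[OF s1 sB] by simp
    next
      case False then show ?thesis using sB by simp
    qed
  qed
  show ?thesis
  proof (rule ex1I[where P="is_stationary p u \<nu>", OF st])
    fix \<pi>2 assume st2: "is_stationary p u \<nu> \<pi>2"
    define e where "e = (\<lambda>y. \<pi> all_zero * \<pi>2 y - \<pi>2 all_zero * \<pi> y)"
    have "\<forall>y\<in>BB. e y = act ?K BB e y"
    proof
      fix y assume y: "y \<in> BB"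
      have "act ?K BB e y = \<pi> all_zero * act ?K BB \<pi>2 y - \<pi>2 all_zero * act ?K BB \<pi> y"
        unfolding e_def by (rule act_lin)
      then show "e y = act ?K BB e y"
        using fixeq[OF st] fixeq[OF st2] y unfolding e_def by (simp add: algebra_simps)
    qed
    from n1_zero[OF dpos SM this] have e0': "\<forall>y\<in>BB. e y = 0" .
    have eall: "\<pi> all_zero * \<pi>2 y = \<pi>2 all_zero * \<pi> y" for y
      using e0'[rule_format, of y] by (cases "y = all_zero") (auto simp: e_def)
    have "(\<Sum>y\<in>UNIV. \<pi> all_zero * \<pi>2 y) = (\<Sum>y\<in>UNIV. \<pi>2 all_zero * \<pi> y)"
      by (rule sum.cong[OF refl]) (rule eall)
    then have "\<pi> all_zero * (\<Sum>y\<in>UNIV. \<pi>2 y) = \<pi>2 all_zero * (\<Sum>y\<in>UNIV. \<pi> y)"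
      by (simp only: sum_distrib_left)
    moreover have "(\<Sum>y\<in>UNIV. \<pi>2 y) = 1" using st2 unfolding is_stationary_def by blast
    ultimately have eq: "\<pi> all_zero = \<pi>2 all_zero" using s1 by simp
    show "\<pi>2 = \<pi>"
    proof
      fix y
      have "\<pi> all_zero * \<pi>2 y = \<pi> all_zero * \<pi> y" using eall[of y] eq by simp
      then show "\<pi>2 y = \<pi> y" using pa_pos[OF st] by simp
    qed
  qed
qed

end



lemma compl_NN: "x \<in> NN \<Longrightarrow> complement_state x \<in> NN"
proof -
  assume x: "x \<in> NN"
  have "complement_state x \<noteq> complement_state all_one" "complement_state x \<noteq> complement_state all_zero"
    using x unfolding NN_def compl_eq_iff by auto
  then show ?thesis unfolding NN_def compl_zero by simp
qed

lemma compl_image_NN: "complement_state ` NN = NN"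
proof
  show "complement_state ` NN \<subseteq> NN" using compl_NN by auto
  show "NN \<subseteq> complement_state ` NN"
  proof
    fix x assume "x \<in> NN"
    then have "complement_state x \<in> NN" by (rule compl_NN)
    then show "x \<in> complement_state ` NN" using image_eqI[of x complement_state "complement_state x"] by simp
  qed
qed

lemma inj_compl: "inj complement_state"
  by (rule injI) simp

lemma sum_compl_NN: "(\<Sum>x\<in>NN. f (complement_state x)) = (\<Sum>x\<in>NN. f x)"
proof -
  have "(\<Sum>x\<in>complement_state ` NN. f x) = (\<Sum>x\<in>NN. f (complement_state x))"
    by (rule sum.reindex[OF inj_on_subset[OF inj_compl subset_UNIV], unfolded comp_def])
  from this[unfolded compl_image_NN] show ?thesis by simp
qed

lemma K0_compl: "trans_prob p 0 \<nu> (complement_state x) (complement_state y) = trans_prob p 0 \<nu> x y"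
  using trans_compl[of p 0 \<nu> x y] trans_u0[of p "1 - \<nu>" x y \<nu>] by simp

lemma NN_ne: "CARD('g::finite) \<ge> 2 \<Longrightarrow> (all_zero :: 'g state) \<noteq> all_one"
  by (auto simp: all_zero_def all_one_def fun_eq_iff)

lemma sum_split3:
  assumes "CARD('g::finite) \<ge> 2"
  shows "(\<Sum>y\<in>UNIV. f y) = f (all_zero :: 'g state) + f all_one + (\<Sum>y\<in>NN. f y)"
proof -
  have U: "UNIV = insert all_zero (insert all_one (NN :: 'g state set))" by (auto simp: NN_def)
  show ?thesis using NN_ne[OF assms] by (subst U) (simp add: NN_def add.assoc)
qed

context
  fixes p :: "'g::finite event \<Rightarrow> real" and \<nu> :: real
    and g :: 'g and es :: "'g event list"
  assumes rr: "replacement_rule p"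
    and nu0: "0 < \<nu>" and nu1: "\<nu> < 1"
    and es_len: "length es \<ge> 1" and es_pos: "\<forall>e\<in>set es. p e > 0"
    and es_fix: "\<forall>h. foldr (\<circ>) (map extend_event es) id h = g"
    and es_g: "\<exists>e\<in>set es. g \<in> fst e"
    and card2: "CARD('g) \<ge> 2"
begin

abbreviation K0 where "K0 \<equiv> trans_prob p 0 \<nu>"

lemma nu0': "0 \<le> \<nu>" using nu0 by simp
lemma nu1': "\<nu> \<le> 1" using nu1 by simp

lemmas ctx = rr nu0' nu1' es_len es_pos es_fix es_g

definition dN where "dN = c0 p es ^ length es"

lemma dN_pos: "0 < dN" unfolding dN_def using c0_pos[OF ctx] by simp

lemma stabNu: "0 \<le> u \<Longrightarrow> u \<le> 1/2 \<Longrightarrow> \<forall>x\<in>NN. Sk (trans_prob p u \<nu>) NN (length es) x \<le> 1 - dN"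
  unfolding dN_def using stab_N[OF ctx] by blast

lemma stabN0: "\<forall>x\<in>NN. Sk K0 NN (length es) x \<le> 1 - dN"
  using stabNu[of 0] by simp

lemma kern0: "kern K0" by (rule kern_trans) (use rr nu0 nu1 in auto)

definition w where "w = (SOME w. \<forall>y\<in>NN. w y = mm p y + act K0 NN w y)"

lemma w_eq: "\<forall>y\<in>NN. w y = mm p y + act K0 NN w y"
proof -
  have "\<exists>w. \<forall>y\<in>NN. w y = mm p y + act K0 NN w y"
    using kern.solve[OF kern0 dN_pos stabN0] by simp
  then show ?thesis unfolding w_def by (rule someI_ex)
qed

lemma w_nn: "\<forall>y\<in>NN. 0 \<le> w y"
  using kern.pos[OF kern0 dN_pos stabN0 w_eq] mm_nonneg[OF rr] by simp

lemma w_nn': "y \<in> NN \<Longrightarrow> 0 \<le> w y" using w_nn by blast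

lemma K0_nn: "0 \<le> K0 x y" by (rule trans_nonneg) (use rr nu0 nu1 in auto)

lemma wc_eq: "y \<in> NN \<Longrightarrow> w (complement_state y) = mm p (complement_state y) + act K0 NN (\<lambda>x. w (complement_state x)) y"
proof -
  assume y: "y \<in> NN"
  have "act K0 NN (\<lambda>x. w (complement_state x)) y = (\<Sum>x\<in>NN. w (complement_state x) * K0 (complement_state x) (complement_state y))"
    unfolding act_def by (simp add: K0_compl)
  also have "\<dots> = (\<Sum>x\<in>NN. w x * K0 x (complement_state y))"
    by (rule sum_compl_NN[where f = "\<lambda>x. w x * K0 x (complement_state y)"])
  also have "\<dots> = act K0 NN w (complement_state y)" by (simp add: act_def)
  finally show ?thesis using w_eq compl_NN[OF y] by simp
qed

definition \<rho> where "\<rho> = (\<Sum>x\<in>NN. w x * K0 x all_one)"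

lemma mass_w: "(\<Sum>y\<in>NN. mm p y) = (\<Sum>x\<in>NN. w x * K0 x all_zero) + \<rho>"
proof -
  have "(\<Sum>y\<in>NN. w y) = (\<Sum>y\<in>NN. mm p y) + (\<Sum>y\<in>NN. \<Sum>x\<in>NN. w x * K0 x y)"
    using w_eq by (simp add: act_def sum.distrib[symmetric])
  also have "(\<Sum>y\<in>NN. \<Sum>x\<in>NN. w x * K0 x y) = (\<Sum>x\<in>NN. w x * (\<Sum>y\<in>NN. K0 x y))"
    by (subst sum.swap) (simp add: sum_distrib_left)
  also have "\<dots> = (\<Sum>x\<in>NN. w x * (1 - K0 x all_zero - K0 x all_one))"
  proof (rule sum.cong[OF refl])
    fix x
    have "(\<Sum>y\<in>UNIV. K0 x y) = 1" by (rule trans_rowsum[OF rr])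
    then have "(\<Sum>y\<in>NN. K0 x y) = 1 - K0 x all_zero - K0 x all_one"
      using sum_split3[OF card2, of "K0 x"] by simp
    then show "w x * (\<Sum>y\<in>NN. K0 x y) = w x * (1 - K0 x all_zero - K0 x all_one)" by simp
  qed
  also have "\<dots> = (\<Sum>x\<in>NN. w x) - (\<Sum>x\<in>NN. w x * K0 x all_zero) - \<rho>"
    unfolding \<rho>_def by (simp add: right_diff_distrib sum_subtractf)
  finally show ?thesis by simp
qed

lemma wc_a: "(\<Sum>x\<in>NN. w (complement_state x) * K0 x all_zero) = \<rho>"
proof -
  have "(\<Sum>x\<in>NN. w (complement_state x) * K0 x all_zero)
      = (\<Sum>x\<in>NN. w (complement_state x) * K0 (complement_state x) all_one)"
    using K0_compl[of p \<nu> _ all_zero] by simp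
  also have "\<dots> = \<rho>" unfolding \<rho>_def by (rule sum_compl_NN[where f = "\<lambda>x. w x * K0 x all_one"])
  finally show ?thesis .
qed

definition e0' where "e0' = (SOME e. e \<in> set es \<and> g \<in> fst e)"

lemma e0': "e0' \<in> set es" "g \<in> fst e0'"
  using someI_ex[OF es_g[unfolded Bex_def]] unfolding e0'_def by auto

lemma w_path:
  "\<forall>z. z \<in> NN \<longrightarrow> 0 < w z \<longrightarrow> set es' \<subseteq> set es \<longrightarrow> z \<circ> foldr (\<circ>) (map extend_event es') id = all_one
     \<longrightarrow> (\<exists>z'\<in>NN. 0 < w z' \<and> 0 < K0 z' all_one)"
proof (induction es')
  case Nil
  then show ?case by (auto simp: NN_def)
next
  case (Cons e es')
  show ?case
  proof (intro allI impI)
    fix z assume z: "z \<in> NN" and wz: "0 < w z" and sub: "set (e # es') \<subseteq> set es"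
      and fin: "z \<circ> foldr (\<circ>) (map extend_event (e # es')) id = all_one"
    define z1 where "z1 = z \<circ> extend_event e"
    have e: "e \<in> set es" using sub by simp
    have st: "c0 p es \<le> K0 z z1" unfolding z1_def by (rule step_nomut[OF ctx]) (use e in auto)
    have fin1: "z1 \<circ> foldr (\<circ>) (map extend_event es') id = all_one"
    proof -
      have "z1 \<circ> foldr (\<circ>) (map extend_event es') id = z \<circ> (extend_event e \<circ> foldr (\<circ>) (map extend_event es') id)"
        unfolding z1_def by (rule comp_assoc)
      also have "\<dots> = z \<circ> foldr (\<circ>) (map extend_event (e # es')) id"
        by (simp only: list.map(2) foldr_Cons comp_apply)
      finally show ?thesis using fin by simp
    qed
    show "\<exists>z'\<in>NN. 0 < w z' \<and> 0 < K0 z' all_one"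
    proof (cases "z1 = all_one")
      case True
      then show ?thesis using z wz st c0_pos[OF ctx] by auto
    next
      case False
      have "z1 \<noteq> all_zero"
      proof
        assume "z1 = all_zero"
        then have "z1 \<circ> foldr (\<circ>) (map extend_event es') id = all_zero" by (simp add: all_zero_def comp_def)
        then show False using fin1 NN_ne[OF card2] by simp
      qed
      then have z1N: "z1 \<in> NN" using False by (simp add: NN_def)
      have "w z * K0 z z1 \<le> (\<Sum>x\<in>NN. w x * K0 x z1)"
        by (rule member_le_sum[OF z]) (auto intro!: mult_nonneg_nonneg w_nn' K0_nn)
      also have "\<dots> \<le> w z1"
        using w_eq z1N mm_nonneg[OF rr, of z1] by (simp add: act_def)
      finally have "w z * K0 z z1 \<le> w z1" .
      moreover have "0 < w z * K0 z z1" using wz st c0_pos[OF ctx] by simp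
      ultimately have "0 < w z1" by simp
      moreover have "set es' \<subseteq> set es" using sub by simp
      ultimately show ?thesis using Cons.IH[rule_format, OF z1N] fin1 by blast
    qed
  qed
qed

lemma rho_pos: "0 < \<rho>"
proof -
  define y0 where "y0 = (\<lambda>h. h = g)"
  obtain h where h: "h \<noteq> g"
  proof (rule ccontr)
    assume "\<not> thesis"
    then have "\<forall>h. h = g" using that by blast
    then have "(UNIV :: 'g set) = {g}" by auto
    then have "card (UNIV::'g set) = card {g}" by (rule arg_cong)
    then have "CARD('g) = 1" by simp
    then show False using card2 by simp
  qed
  have y0N: "y0 \<in> NN" unfolding NN_def y0_def all_zero_def all_one_def using h by (auto simp: fun_eq_iff)
  have "{x. y0 x} = {g}" by (auto simp: y0_def)
  then have "p e0' * (if card {x. y0 x} = 1 \<and> {x. y0 x} \<subseteq> fst e0' then 1 else 0) = p e0'"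
    using e0' by simp
  moreover have "p e0' * (if card {x. y0 x} = 1 \<and> {x. y0 x} \<subseteq> fst e0' then 1 else 0) \<le> mm p y0"
    unfolding mm_def by (rule member_le_sum[where f = "\<lambda>e. p e * (if card {x. y0 x} = 1 \<and> {x. y0 x} \<subseteq> fst e then 1 else 0)"])
       (auto intro!: mult_nonneg_nonneg rr_nonneg[OF rr])
  moreover have "0 \<le> act K0 NN w y0" unfolding act_def by (auto intro!: sum_nonneg mult_nonneg_nonneg w_nn' K0_nn)
  moreover have "w y0 = mm p y0 + act K0 NN w y0" using w_eq y0N by blast
  ultimately have "p e0' \<le> w y0" by linarith
  moreover have "0 < p e0'" using es_pos e0'(1) by blast
  ultimately have wy0: "0 < w y0" by linarith
  have "y0 \<circ> foldr (\<circ>) (map extend_event es) id = all_one"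
    unfolding const_fix[OF es_fix, of y0] by (simp add: y0_def all_one_def)
  then obtain z' where z': "z' \<in> NN" "0 < w z'" "0 < K0 z' all_one"
    using w_path[of es] y0N wy0 by blast
  have "w z' * K0 z' all_one \<le> \<rho>" unfolding \<rho>_def
    by (rule member_le_sum[OF z'(1)]) (auto intro!: mult_nonneg_nonneg w_nn' K0_nn)
  moreover have "0 < w z' * K0 z' all_one" using z' by simp
  ultimately show ?thesis by simp
qed

lemma sumw_pos: "0 < (\<Sum>x\<in>NN. w x)"
proof -
  have "\<rho> \<le> (\<Sum>x\<in>NN. w x)" unfolding \<rho>_def
    by (rule sum_mono) (simp add: w_nn' mult_left_le trans_le1[OF rr] nu0' nu1')
  then show ?thesis using rho_pos by simp
qed

end


lemma abs_scale_le: "0 \<le> c \<Longrightarrow> c \<le> 1 \<Longrightarrow> \<bar>c * X\<bar> \<le> \<bar>X::real\<bar>"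
  by (simp add: abs_mult mult_left_le_one_le)

lemma abs_wsum_le:
  assumes "\<forall>x\<in>S. 0 \<le> (v x::real)"
  shows "\<bar>\<Sum>x\<in>S. v x * d x\<bar> \<le> (\<Sum>x\<in>S. v x * \<bar>d x\<bar>)"
  using assms by (intro order_trans[OF sum_abs] sum_mono) (simp add: abs_mult)

context
  fixes p :: "'g::finite event \<Rightarrow> real" and \<nu> :: real
    and g :: 'g and es :: "'g event list"
  assumes rr: "replacement_rule p"
    and nu0: "0 < \<nu>" and nu1: "\<nu> < 1"
    and es_len: "length es \<ge> 1" and es_pos: "\<forall>e\<in>set es. p e > 0"
    and es_fix: "\<forall>h. foldr (\<circ>) (map extend_event es) id h = g"
    and es_g: "\<exists>e\<in>set es. g \<in> fst e"
    and card2: "CARD('g) \<ge> 2"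
begin

lemmas ctx2 = rr nu0 nu1 es_len es_pos es_fix es_g card2
lemmas ctx1 = rr nu0'[OF ctx2] nu1'[OF ctx2] es_len es_pos es_fix es_g

abbreviation Ku where "Ku u \<equiv> trans_prob p u \<nu>"
abbreviation W where "W \<equiv> w p \<nu>"
abbreviation cs where "cs \<equiv> complement_state"

definition PI where "PI u = pi_MSS p u \<nu>"
definition pa where "pa u = PI u all_zero"
definition pA where "pA u = PI u all_one"
definition E where "E u y = PI u y / u - (pa u * \<nu> * W y + pA u * (1 - \<nu>) * W (cs y))"

lemma PI_stat: "0 < u \<Longrightarrow> u \<le> 1/2 \<Longrightarrow> is_stationary p u \<nu> (PI u)"
  unfolding PI_def pi_MSS_def by (rule theI'[OF stat_ex1[OF ctx1]]) (use nu1 in auto)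

lemma PI_bounds: assumes "0 < u" "u \<le> 1/2" shows "0 \<le> PI u x" "PI u x \<le> 1"
proof -
  have st: "is_stationary p u \<nu> (PI u)" by (rule PI_stat[OF assms])
  then show "0 \<le> PI u x" unfolding is_stationary_def by simp
  have "PI u x \<le> (\<Sum>y\<in>UNIV. PI u y)" by (rule member_le_sum) (use st in \<open>auto simp: is_stationary_def\<close>)
  then show "PI u x \<le> 1" using st unfolding is_stationary_def by simp
qed

lemma W_nn: "y \<in> NN \<Longrightarrow> 0 \<le> W y" by (rule w_nn'[OF ctx2])
lemma Wc_nn: "y \<in> NN \<Longrightarrow> 0 \<le> W (cs y)" by (rule w_nn'[OF ctx2 compl_NN])

lemma Ku_nn: "0 \<le> u \<Longrightarrow> u \<le> 1 \<Longrightarrow> 0 \<le> Ku u x y"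
  by (rule trans_nonneg) (use rr nu0 nu1 in auto)
lemma Ku_le1: "0 \<le> u \<Longrightarrow> u \<le> 1 \<Longrightarrow> Ku u x y \<le> 1"
  by (rule trans_le1) (use rr nu0 nu1 in auto)

lemma Dform:
  assumes u0: "0 < u" and u1: "u \<le> 1/2" and y: "y \<in> NN"
  shows "E u y - act (Ku u) NN (E u) y =
     pa u * (Ku u all_zero y / u - \<nu> * mm p y) + pA u * (Ku u all_one y / u - (1 - \<nu>) * mm p (cs y))
     + pa u * \<nu> * (\<Sum>x\<in>NN. W x * (Ku u x y - trans_prob p 0 \<nu> x y))
     + pA u * (1 - \<nu>) * (\<Sum>x\<in>NN. W (cs x) * (Ku u x y - trans_prob p 0 \<nu> x y))"
proof -
  define a where "a = pa u"
  define A where "A = pA u"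
  define S1 where "S1 = (\<Sum>x\<in>NN. PI u x * Ku u x y)"
  define Sw where "Sw = (\<Sum>x\<in>NN. W x * Ku u x y)"
  define Swc where "Swc = (\<Sum>x\<in>NN. W (cs x) * Ku u x y)"
  define Sw0 where "Sw0 = (\<Sum>x\<in>NN. W x * trans_prob p 0 \<nu> x y)"
  define Swc0 where "Swc0 = (\<Sum>x\<in>NN. W (cs x) * trans_prob p 0 \<nu> x y)"
  have st: "is_stationary p u \<nu> (PI u)" by (rule PI_stat[OF u0 u1])
  have h1: "PI u y = a * Ku u all_zero y + A * Ku u all_one y + S1"
  proof -
    have "PI u y = (\<Sum>x\<in>UNIV. PI u x * Ku u x y)" using st unfolding is_stationary_def by simp
    then show ?thesis unfolding a_def A_def pa_def pA_def S1_def using sum_split3[OF card2] by simp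
  qed
  have h2: "act (Ku u) NN (E u) y = S1 / u - a * \<nu> * Sw - A * (1 - \<nu>) * Swc"
  proof -
    have "act (Ku u) NN (E u) y = (\<Sum>x\<in>NN. PI u x * Ku u x y / u - a * \<nu> * (W x * Ku u x y) - A * (1 - \<nu>) * (W (cs x) * Ku u x y))"
      unfolding act_def E_def a_def A_def by (rule sum.cong[OF refl]) (simp add: algebra_simps)
    also have "\<dots> = S1 / u - a * \<nu> * Sw - A * (1 - \<nu>) * Swc"
      unfolding S1_def Sw_def Swc_def by (simp add: sum_subtractf sum_distrib_left sum_divide_distrib)
    finally show ?thesis .
  qed
  have h3: "W y = mm p y + Sw0" using w_eq[OF ctx2] y unfolding Sw0_def act_def by blast
  have h4: "W (cs y) = mm p (cs y) + Swc0" using wc_eq[OF ctx2 y] unfolding Swc0_def act_def by simp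
  have h5: "(\<Sum>x\<in>NN. W x * (Ku u x y - trans_prob p 0 \<nu> x y)) = Sw - Sw0"
    unfolding Sw_def Sw0_def by (simp add: right_diff_distrib sum_subtractf)
  have h6: "(\<Sum>x\<in>NN. W (cs x) * (Ku u x y - trans_prob p 0 \<nu> x y)) = Swc - Swc0"
    unfolding Swc_def Swc0_def by (simp add: right_diff_distrib sum_subtractf)
  have Ey: "E u y = PI u y / u - (a * \<nu> * W y + A * (1 - \<nu>) * W (cs y))"
    unfolding E_def a_def A_def by simp
  show ?thesis
    unfolding h2 h5 h6 Ey a_def[symmetric] A_def[symmetric] h1 h3 h4
    using u0 by (simp add: field_simps)
qed

definition bnd where "bnd u y = \<bar>Ku u all_zero y / u - \<nu> * mm p y\<bar> + \<bar>Ku u all_one y / u - (1 - \<nu>) * mm p (cs y)\<bar>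
   + (\<Sum>x\<in>NN. (W x + W (cs x)) * \<bar>Ku u x y - trans_prob p 0 \<nu> x y\<bar>)"

lemma D_bound:
  assumes u0: "0 < u" and u1: "u \<le> 1/2" and y: "y \<in> NN"
  shows "\<bar>E u y - act (Ku u) NN (E u) y\<bar> \<le> bnd u y"
proof -
  have a: "0 \<le> pa u" "pa u \<le> 1" "0 \<le> pA u" "pA u \<le> 1"
    unfolding pa_def pA_def using PI_bounds[OF u0 u1] by auto
  have c1: "0 \<le> pa u * \<nu>" "pa u * \<nu> \<le> 1" using a nu0 nu1 by (auto intro: mult_le_one)
  have c2: "0 \<le> pA u * (1 - \<nu>)" "pA u * (1 - \<nu>) \<le> 1" using a nu0 nu1 by (auto intro: mult_le_one)
  have t1: "\<bar>pa u * (Ku u all_zero y / u - \<nu> * mm p y)\<bar> \<le> \<bar>Ku u all_zero y / u - \<nu> * mm p y\<bar>"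
    by (rule abs_scale_le) (use a in auto)
  have t2: "\<bar>pA u * (Ku u all_one y / u - (1 - \<nu>) * mm p (cs y))\<bar> \<le> \<bar>Ku u all_one y / u - (1 - \<nu>) * mm p (cs y)\<bar>"
    by (rule abs_scale_le) (use a in auto)
  have t3: "\<bar>pa u * \<nu> * (\<Sum>x\<in>NN. W x * (Ku u x y - trans_prob p 0 \<nu> x y))\<bar> \<le> (\<Sum>x\<in>NN. W x * \<bar>Ku u x y - trans_prob p 0 \<nu> x y\<bar>)"
    by (rule order_trans[OF abs_scale_le[OF c1] abs_wsum_le]) (simp add: W_nn)
  have t4: "\<bar>pA u * (1 - \<nu>) * (\<Sum>x\<in>NN. W (cs x) * (Ku u x y - trans_prob p 0 \<nu> x y))\<bar> \<le> (\<Sum>x\<in>NN. W (cs x) * \<bar>Ku u x y - trans_prob p 0 \<nu> x y\<bar>)"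
    by (rule order_trans[OF abs_scale_le[OF c2] abs_wsum_le]) (simp add: Wc_nn)
  have "(\<Sum>x\<in>NN. (W x + W (cs x)) * \<bar>Ku u x y - trans_prob p 0 \<nu> x y\<bar>) =
      (\<Sum>x\<in>NN. W x * \<bar>Ku u x y - trans_prob p 0 \<nu> x y\<bar>) + (\<Sum>x\<in>NN. W (cs x) * \<bar>Ku u x y - trans_prob p 0 \<nu> x y\<bar>)"
    by (simp add: distrib_right sum.distrib)
  then show ?thesis unfolding Dform[OF assms] bnd_def using t1 t2 t3 t4 by linarith
qed

lemma E_stab:
  assumes u0: "0 < u" and u1: "u \<le> 1/2"
  shows "n1 NN (E u) \<le> real (length es) / dN p es * (\<Sum>y\<in>NN. bnd u y)"
proof -
  interpret kern "Ku u" by (rule kern_trans) (use rr nu0 nu1 u0 u1 in auto)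
  have "dN p es * n1 NN (E u) \<le> real (length es) * n1 NN (\<lambda>y. E u y - act (Ku u) NN (E u) y)"
    by (rule stab[OF dN_pos[OF ctx2] stabNu[OF ctx2]]) (use u0 u1 in auto)
  also have "n1 NN (\<lambda>y. E u y - act (Ku u) NN (E u) y) \<le> (\<Sum>y\<in>NN. bnd u y)"
    unfolding n1_def by (rule sum_mono) (rule D_bound[OF u0 u1])
  then have "real (length es) * n1 NN (\<lambda>y. E u y - act (Ku u) NN (E u) y) \<le> real (length es) * (\<Sum>y\<in>NN. bnd u y)"
    by (rule mult_left_mono) simp
  finally show ?thesis using dN_pos[OF ctx2] by (simp add: field_simps)
qed

lemma Ku_lim: "((\<lambda>u. Ku u x y) \<longlongrightarrow> trans_prob p 0 \<nu> x y) (at_right 0)"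
proof -
  have "isCont (\<lambda>u. Ku u x y) 0" by (rule trans_cont)
  then show ?thesis unfolding isCont_def by (rule tendsto_mono[OF at_within_le_at])
qed

lemma bnd_lim: "y \<in> NN \<Longrightarrow> ((\<lambda>u. bnd u y) \<longlongrightarrow> 0) (at_right 0)"
proof -
  assume y: "y \<in> NN"
  have ya: "y \<noteq> all_zero" and yA: "y \<noteq> all_one" using y by (auto simp: NN_def)
  have l1: "((\<lambda>u. \<bar>Ku u all_zero y / u - \<nu> * mm p y\<bar>) \<longlongrightarrow> 0) (at_right 0)"
    by (rule tendsto_rabs_zero[OF LIM_zero[OF trans_a_lim[OF ya]]])
  have l2: "((\<lambda>u. \<bar>Ku u all_one y / u - (1 - \<nu>) * mm p (cs y)\<bar>) \<longlongrightarrow> 0) (at_right 0)"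
    by (rule tendsto_rabs_zero[OF LIM_zero[OF trans_A_lim[OF yA]]])
  have l3: "((\<lambda>u. \<Sum>x\<in>NN. (W x + W (cs x)) * \<bar>Ku u x y - trans_prob p 0 \<nu> x y\<bar>) \<longlongrightarrow> 0) (at_right 0)"
    by (rule tendsto_null_sum, rule tendsto_mult_right_zero, rule tendsto_rabs_zero[OF LIM_zero[OF Ku_lim]])
  show ?thesis unfolding bnd_def by (rule tendsto_add_zero[OF tendsto_add_zero[OF l1 l2] l3])
qed

lemma ev_small: "\<forall>\<^sub>F u in at_right (0::real). 0 < u \<and> u \<le> 1/2"
  by (auto simp: eventually_at_right[of 0 "1/2"] intro!: exI[of _ "1/2"])

lemma nE_lim: "((\<lambda>u. n1 NN (E u)) \<longlongrightarrow> 0) (at_right 0)"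
proof (rule tendsto_sandwich[of "\<lambda>_. 0" _ _ "\<lambda>u. real (length es) / dN p es * (\<Sum>y\<in>NN. bnd u y)"])
  show "\<forall>\<^sub>F u in at_right 0. 0 \<le> n1 NN (E u)"
    by (rule always_eventually) (simp add: n1_def sum_nonneg)
  show "\<forall>\<^sub>F u in at_right 0. n1 NN (E u) \<le> real (length es) / dN p es * (\<Sum>y\<in>NN. bnd u y)"
    using ev_small by eventually_elim (rule E_stab, auto)
  show "((\<lambda>u. 0) \<longlongrightarrow> 0) (at_right 0)" by simp
  show "((\<lambda>u. real (length es) / dN p es * (\<Sum>y\<in>NN. bnd u y)) \<longlongrightarrow> 0) (at_right 0)"
    by (rule tendsto_mult_right_zero, rule tendsto_null_sum, rule bnd_lim)
qed

end


lemma tendsto_ev_eq: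
  assumes "(f \<longlongrightarrow> l) F" "\<forall>\<^sub>F x in F. f x = g x" shows "(g \<longlongrightarrow> l) F"
  using assms(1) unfolding tendsto_cong[OF assms(2)] .

context
  fixes p :: "'g::finite event \<Rightarrow> real" and \<nu> :: real
    and g :: 'g and es :: "'g event list"
  assumes rr: "replacement_rule p"
    and nu0: "0 < \<nu>" and nu1: "\<nu> < 1"
    and es_len: "length es \<ge> 1" and es_pos: "\<forall>e\<in>set es. p e > 0"
    and es_fix: "\<forall>h. foldr (\<circ>) (map extend_event es) id h = g"
    and es_g: "\<exists>e\<in>set es. g \<in> fst e"
    and card2: "CARD('g) \<ge> 2"
begin

lemmas ctx3 = rr nu0 nu1 es_len es_pos es_fix es_g card2
lemmas pa_d = pa_def[OF ctx3] and pA_d = pA_def[OF ctx3] and E_d = E_def[OF ctx3] and PI_d = PI_def[OF ctx3]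

abbreviation Kv where "Kv u \<equiv> trans_prob p u \<nu>"
abbreviation Wv where "Wv \<equiv> w p \<nu>"
abbreviation csv where "csv \<equiv> complement_state"
abbreviation K0v where "K0v \<equiv> trans_prob p 0 \<nu>"
abbreviation a where "a u \<equiv> pa p \<nu> u"
abbreviation A where "A u \<equiv> pA p \<nu> u"
abbreviation P where "P u \<equiv> PI p \<nu> u"
abbreviation EE where "EE u \<equiv> E p \<nu> u"
abbreviation r where "r \<equiv> \<rho> p \<nu>"

lemma ab_bounds: assumes "0 < u" "u \<le> 1/2" shows "0 \<le> a u" "a u \<le> 1" "0 \<le> A u" "A u \<le> 1"
  unfolding pa_d pA_d using PI_bounds[OF ctx3 assms] by auto

lemma P_E: "0 < u \<Longrightarrow> P u y = u * (EE u y + a u * \<nu> * Wv y + A u * (1 - \<nu>) * Wv (csv y))"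
  unfolding E_d by (simp add: field_simps)

lemma phi_form:
  assumes u0: "0 < u" and u1: "u \<le> 1/2"
  shows "a u * \<nu> * r - A u * (1 - \<nu>) * r =
    -(a u * (Kv u all_zero all_one / u) + a u * (\<Sum>y\<in>NN. Kv u all_zero y / u - \<nu> * mm p y)
      - A u * (Kv u all_one all_zero / u) - (\<Sum>x\<in>NN. EE u x * Kv u x all_zero)
      - a u * \<nu> * (\<Sum>x\<in>NN. Wv x * (Kv u x all_zero - K0v x all_zero))
      - A u * (1 - \<nu>) * (\<Sum>x\<in>NN. Wv (csv x) * (Kv u x all_zero - K0v x all_zero)))"
proof -
  define aa where "aa = a u"
  define AA where "AA = A u"
  define Saa where "Saa = Kv u all_zero all_zero"
  define SaA where "SaA = Kv u all_zero all_one"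
  define SAa where "SAa = Kv u all_one all_zero"
  define T where "T = (\<Sum>y\<in>NN. Kv u all_zero y)"
  define S1a where "S1a = (\<Sum>x\<in>NN. P u x * Kv u x all_zero)"
  define SEK where "SEK = (\<Sum>x\<in>NN. EE u x * Kv u x all_zero)"
  define Sw where "Sw = (\<Sum>x\<in>NN. Wv x * Kv u x all_zero)"
  define Swc where "Swc = (\<Sum>x\<in>NN. Wv (csv x) * Kv u x all_zero)"
  define Sw0 where "Sw0 = (\<Sum>x\<in>NN. Wv x * K0v x all_zero)"
  define Swc0 where "Swc0 = (\<Sum>x\<in>NN. Wv (csv x) * K0v x all_zero)"
  define Smm where "Smm = (\<Sum>y\<in>NN. mm p y)"
  have st: "is_stationary p u \<nu> (P u)" by (rule PI_stat[OF ctx3 u0 u1])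
  have f1: "aa = aa * Saa + AA * SAa + S1a"
  proof -
    have e1: "P u all_zero = (\<Sum>x\<in>UNIV. P u x * Kv u x all_zero)" using st unfolding is_stationary_def by simp
    have e2: "(\<Sum>x\<in>UNIV. P u x * Kv u x all_zero) = P u all_zero * Kv u all_zero all_zero
       + P u all_one * Kv u all_one all_zero + (\<Sum>x\<in>NN. P u x * Kv u x all_zero)"
      by (rule sum_split3[OF card2])
    show ?thesis unfolding aa_def AA_def pa_d pA_d Saa_def SAa_def S1a_def
      using e1 e2 by linarith
  qed
  have f2: "1 = Saa + SaA + T"
    using trans_rowsum[OF rr, of u \<nu> all_zero] sum_split3[OF card2, of "Kv u all_zero"]
    unfolding Saa_def SaA_def T_def by simp
  have f3: "S1a = u * SEK + u * aa * \<nu> * Sw + u * AA * (1 - \<nu>) * Swc"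
  proof -
    have "S1a = (\<Sum>x\<in>NN. u * (EE u x * Kv u x all_zero) + u * aa * \<nu> * (Wv x * Kv u x all_zero)
        + u * AA * (1 - \<nu>) * (Wv (csv x) * Kv u x all_zero))"
      unfolding S1a_def aa_def AA_def by (rule sum.cong[OF refl]) (simp add: P_E[OF u0] algebra_simps)
    then show ?thesis unfolding SEK_def Sw_def Swc_def by (simp add: sum.distrib sum_distrib_left)
  qed
  have f4: "Smm = Sw0 + r" unfolding Smm_def Sw0_def using mass_w[OF ctx3] by simp
  have f5: "Swc0 = r" unfolding Swc0_def using wc_a[OF ctx3] by simp
  have f6: "(\<Sum>y\<in>NN. Kv u all_zero y / u - \<nu> * mm p y) = T / u - \<nu> * Smm"
    unfolding T_def Smm_def by (simp add: sum_subtractf sum_divide_distrib sum_distrib_left)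
  have f7: "(\<Sum>x\<in>NN. Wv x * (Kv u x all_zero - K0v x all_zero)) = Sw - Sw0"
    unfolding Sw_def Sw0_def by (simp add: right_diff_distrib sum_subtractf)
  have f8: "(\<Sum>x\<in>NN. Wv (csv x) * (Kv u x all_zero - K0v x all_zero)) = Swc - Swc0"
    unfolding Swc_def Swc0_def by (simp add: right_diff_distrib sum_subtractf)
  have g1: "aa * (SaA + T) = AA * SAa + u * SEK + u * aa * \<nu> * Sw + u * AA * (1 - \<nu>) * Swc"
  proof -
    have "SaA + T = 1 - Saa" using f2 by linarith
    then have "aa * (SaA + T) = aa - aa * Saa" by (simp add: right_diff_distrib)
    also have "\<dots> = AA * SAa + S1a" using f1 by linarith
    finally show ?thesis using f3 by linarith
  qed
  have q1: "aa * (SaA / u) + aa * (T / u) - AA * (SAa / u) = (aa * (SaA + T) - AA * SAa) / u"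
    using u0 by (simp add: field_simps)
  also have "\<dots> = SEK + aa * \<nu> * Sw + AA * (1 - \<nu>) * Swc" using g1 u0 by (simp add: field_simps)
  finally have q: "aa * (SaA / u) + aa * (T / u) - AA * (SAa / u) = SEK + aa * \<nu> * Sw + AA * (1 - \<nu>) * Swc" .
  show ?thesis
    unfolding f6 f7 f8 aa_def[symmetric] AA_def[symmetric] SaA_def[symmetric] SAa_def[symmetric] SEK_def[symmetric]
    using q f4 f5 by (simp add: algebra_simps)
qed


definition gam where "gam u = \<bar>Kv u all_zero all_one / u\<bar> + (\<Sum>y\<in>NN. \<bar>Kv u all_zero y / u - \<nu> * mm p y\<bar>)
   + \<bar>Kv u all_one all_zero / u\<bar> + n1 NN (EE u) + (\<Sum>x\<in>NN. (Wv x + Wv (csv x)) * \<bar>Kv u x all_zero - K0v x all_zero\<bar>)"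

lemma phi_bound:
  assumes u0: "0 < u" and u1: "u \<le> 1/2"
  shows "\<bar>a u * \<nu> * r - A u * (1 - \<nu>) * r\<bar> \<le> gam u"
proof -
  note ab = ab_bounds[OF u0 u1]
  have c1: "0 \<le> a u * \<nu>" "a u * \<nu> \<le> 1" using ab nu0 nu1 by (auto intro: mult_le_one)
  have c2: "0 \<le> A u * (1 - \<nu>)" "A u * (1 - \<nu>) \<le> 1" using ab nu0 nu1 by (auto intro: mult_le_one)
  have t1: "\<bar>a u * (Kv u all_zero all_one / u)\<bar> \<le> \<bar>Kv u all_zero all_one / u\<bar>"
    by (rule abs_scale_le) (use ab in auto)
  have t2: "\<bar>a u * (\<Sum>y\<in>NN. Kv u all_zero y / u - \<nu> * mm p y)\<bar> \<le> (\<Sum>y\<in>NN. \<bar>Kv u all_zero y / u - \<nu> * mm p y\<bar>)"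
    by (rule order_trans[OF abs_scale_le sum_abs]) (use ab in auto)
  have t3: "\<bar>A u * (Kv u all_one all_zero / u)\<bar> \<le> \<bar>Kv u all_one all_zero / u\<bar>"
    by (rule abs_scale_le) (use ab in auto)
  have t4: "\<bar>\<Sum>x\<in>NN. EE u x * Kv u x all_zero\<bar> \<le> n1 NN (EE u)"
    unfolding n1_def
  proof (rule order_trans[OF sum_abs], rule sum_mono)
    fix x
    have "0 \<le> Kv u x all_zero" "Kv u x all_zero \<le> 1" using Ku_nn[OF ctx3] Ku_le1[OF ctx3] u0 u1 by auto
    then show "\<bar>EE u x * Kv u x all_zero\<bar> \<le> \<bar>EE u x\<bar>"
      by (simp add: abs_mult mult_left_le)
  qed
  have t5: "\<bar>a u * \<nu> * (\<Sum>x\<in>NN. Wv x * (Kv u x all_zero - K0v x all_zero))\<bar> \<le> (\<Sum>x\<in>NN. Wv x * \<bar>Kv u x all_zero - K0v x all_zero\<bar>)"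
    by (rule order_trans[OF abs_scale_le[OF c1] abs_wsum_le]) (simp add: W_nn[OF ctx3])
  have t6: "\<bar>A u * (1 - \<nu>) * (\<Sum>x\<in>NN. Wv (csv x) * (Kv u x all_zero - K0v x all_zero))\<bar> \<le> (\<Sum>x\<in>NN. Wv (csv x) * \<bar>Kv u x all_zero - K0v x all_zero\<bar>)"
    by (rule order_trans[OF abs_scale_le[OF c2] abs_wsum_le]) (simp add: Wc_nn[OF ctx3])
  have "(\<Sum>x\<in>NN. (Wv x + Wv (csv x)) * \<bar>Kv u x all_zero - K0v x all_zero\<bar>) =
      (\<Sum>x\<in>NN. Wv x * \<bar>Kv u x all_zero - K0v x all_zero\<bar>) + (\<Sum>x\<in>NN. Wv (csv x) * \<bar>Kv u x all_zero - K0v x all_zero\<bar>)"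
    by (simp add: distrib_right sum.distrib)
  then show ?thesis unfolding phi_form[OF u0 u1] gam_def using t1 t2 t3 t4 t5 t6 by linarith
qed

lemma mmA: "mm p (all_one :: 'g state) = 0" by (rule mm_one[OF card2])

lemma gam_lim: "(gam \<longlongrightarrow> 0) (at_right 0)"
proof -
  have aA: "all_one \<noteq> (all_zero :: 'g state)" using NN_ne[OF card2] by simp
  have "((\<lambda>u. Kv u all_zero all_one / u) \<longlongrightarrow> \<nu> * mm p all_one) (at_right 0)" by (rule trans_a_lim[OF aA])
  then have "((\<lambda>u. Kv u all_zero all_one / u) \<longlongrightarrow> 0) (at_right 0)" using mmA by simp
  then have l1: "((\<lambda>u. \<bar>Kv u all_zero all_one / u\<bar>) \<longlongrightarrow> 0) (at_right 0)" by (rule tendsto_rabs_zero)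
  have l2: "((\<lambda>u. \<Sum>y\<in>NN. \<bar>Kv u all_zero y / u - \<nu> * mm p y\<bar>) \<longlongrightarrow> 0) (at_right 0)"
  proof (rule tendsto_null_sum)
    fix y :: "'g state" assume "y \<in> NN"
    then have "y \<noteq> all_zero" by (simp add: NN_def)
    then show "((\<lambda>u. \<bar>Kv u all_zero y / u - \<nu> * mm p y\<bar>) \<longlongrightarrow> 0) (at_right 0)"
      by (rule tendsto_rabs_zero[OF LIM_zero[OF trans_a_lim]])
  qed
  have "((\<lambda>u. Kv u all_one all_zero / u) \<longlongrightarrow> (1 - \<nu>) * mm p (csv all_zero)) (at_right 0)" by (rule trans_A_lim[OF aA[symmetric]])
  then have "((\<lambda>u. Kv u all_one all_zero / u) \<longlongrightarrow> 0) (at_right 0)" using mmA by simp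
  then have l3: "((\<lambda>u. \<bar>Kv u all_one all_zero / u\<bar>) \<longlongrightarrow> 0) (at_right 0)" by (rule tendsto_rabs_zero)
  have l4: "((\<lambda>u. n1 NN (EE u)) \<longlongrightarrow> 0) (at_right 0)" by (rule nE_lim[OF ctx3])
  have l5: "((\<lambda>u. \<Sum>x\<in>NN. (Wv x + Wv (csv x)) * \<bar>Kv u x all_zero - K0v x all_zero\<bar>) \<longlongrightarrow> 0) (at_right 0)"
    by (rule tendsto_null_sum, rule tendsto_mult_right_zero, rule tendsto_rabs_zero[OF LIM_zero[OF Ku_lim[OF ctx3]]])
  show ?thesis unfolding gam_def
    by (intro tendsto_add_zero l1 l2 l3 l4 l5)
qed

lemma phi_lim: "((\<lambda>u. a u * \<nu> - A u * (1 - \<nu>)) \<longlongrightarrow> 0) (at_right 0)"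
proof -
  have ev1: "\<forall>\<^sub>F u in at_right 0. 0 \<le> \<bar>a u * \<nu> * r - A u * (1 - \<nu>) * r\<bar>" by simp
  have ev2: "\<forall>\<^sub>F u in at_right 0. \<bar>a u * \<nu> * r - A u * (1 - \<nu>) * r\<bar> \<le> gam u"
    using ev_small[OF ctx3]
  proof eventually_elim
    case (elim u) then show ?case using phi_bound[of u] by blast
  qed
  have z: "((\<lambda>u::real. 0::real) \<longlongrightarrow> 0) (at_right 0)" by (rule tendsto_const)
  have l: "((\<lambda>u. \<bar>a u * \<nu> * r - A u * (1 - \<nu>) * r\<bar>) \<longlongrightarrow> 0) (at_right 0)"
    by (rule tendsto_sandwich[OF ev1 ev2 z gam_lim])
  have l2: "((\<lambda>u. a u * \<nu> * r - A u * (1 - \<nu>) * r) \<longlongrightarrow> 0) (at_right 0)"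
    by (rule tendsto_rabs_zero_cancel[OF l])
  have l3: "((\<lambda>u. (a u * \<nu> * r - A u * (1 - \<nu>) * r) / r) \<longlongrightarrow> 0) (at_right 0)"
    by (rule tendsto_divide_zero[OF l2])
  have eq: "(\<lambda>u. (a u * \<nu> * r - A u * (1 - \<nu>) * r) / r) = (\<lambda>u. a u * \<nu> - A u * (1 - \<nu>))"
  proof
    fix u
    have "r \<noteq> 0" using rho_pos[OF ctx3] by simp
    then show "(a u * \<nu> * r - A u * (1 - \<nu>) * r) / r = a u * \<nu> - A u * (1 - \<nu>)"
      by (simp add: field_simps)
  qed
  show ?thesis using l3 unfolding eq .
qed

definition sNN where "sNN u = (\<Sum>y\<in>NN. P u y)"

lemma mass_eq: "0 < u \<Longrightarrow> u \<le> 1/2 \<Longrightarrow> a u + A u + sNN u = 1"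
proof -
  assume u: "0 < u" "u \<le> 1/2"
  have st: "is_stationary p u \<nu> (P u)" by (rule PI_stat[OF ctx3 u])
  then have "(\<Sum>y\<in>UNIV. P u y) = 1" unfolding is_stationary_def by blast
  then show ?thesis unfolding sNN_def pa_d pA_d using sum_split3[OF card2, of "P u"] by simp
qed

lemma sNN_bound:
  assumes u0: "0 < u" and u1: "u \<le> 1/2"
  shows "\<bar>sNN u\<bar> \<le> u * (n1 NN (EE u) + (\<Sum>y\<in>NN. Wv y) + (\<Sum>y\<in>NN. Wv (csv (y::'g state))))"
proof -
  note ab = ab_bounds[OF u0 u1]
  have "sNN u = (\<Sum>y\<in>NN. u * (EE u y + a u * \<nu> * Wv y + A u * (1 - \<nu>) * Wv (csv (y::'g state))))"
    unfolding sNN_def by (rule sum.cong[OF refl]) (rule P_E[OF u0])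
  also have "\<dots> = u * (\<Sum>y\<in>NN. EE u y + a u * \<nu> * Wv y + A u * (1 - \<nu>) * Wv (csv (y::'g state)))"
    by (simp add: sum_distrib_left)
  finally have eq: "\<bar>sNN u\<bar> = u * \<bar>\<Sum>y\<in>NN. EE u y + a u * \<nu> * Wv y + A u * (1 - \<nu>) * Wv (csv (y::'g state))\<bar>"
    using u0 by (simp add: abs_mult)
  have "\<bar>\<Sum>y\<in>NN. EE u y + a u * \<nu> * Wv y + A u * (1 - \<nu>) * Wv (csv (y::'g state))\<bar>
      \<le> (\<Sum>y\<in>NN. \<bar>EE u y\<bar> + Wv y + Wv (csv (y::'g state)))"
  proof (rule order_trans[OF sum_abs], rule sum_mono)
    fix y :: "'g state" assume y: "y \<in> NN"
    have c1: "0 \<le> a u * \<nu>" "a u * \<nu> \<le> 1" using ab nu0 nu1 by (auto intro: mult_le_one)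
    have c2: "0 \<le> A u * (1 - \<nu>)" "A u * (1 - \<nu>) \<le> 1" using ab nu0 nu1 by (auto intro: mult_le_one)
    have "\<bar>a u * \<nu> * Wv y\<bar> \<le> \<bar>Wv y\<bar>" by (rule abs_scale_le[OF c1])
    moreover have "\<bar>A u * (1 - \<nu>) * Wv (csv (y::'g state))\<bar> \<le> \<bar>Wv (csv (y::'g state))\<bar>" by (rule abs_scale_le[OF c2])
    moreover have "\<bar>Wv y\<bar> = Wv y" "\<bar>Wv (csv (y::'g state))\<bar> = Wv (csv (y::'g state))" using W_nn[OF ctx3 y] Wc_nn[OF ctx3 y] by auto
    ultimately show "\<bar>EE u y + a u * \<nu> * Wv y + A u * (1 - \<nu>) * Wv (csv (y::'g state))\<bar> \<le> \<bar>EE u y\<bar> + Wv y + Wv (csv (y::'g state))"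
      by linarith
  qed
  also have "\<dots> = n1 NN (EE u) + (\<Sum>y\<in>NN. Wv y) + (\<Sum>y\<in>NN. Wv (csv (y::'g state)))"
    unfolding n1_def by (simp add: sum.distrib)
  finally show ?thesis unfolding eq using u0 by (simp add: mult_left_mono)
qed

lemma sNN_lim: "(sNN \<longlongrightarrow> 0) (at_right 0)"
proof (rule tendsto_rabs_zero_cancel, rule tendsto_sandwich[of "\<lambda>_. 0" _ _ "\<lambda>u. u * (n1 NN (EE u) + (\<Sum>y\<in>NN. Wv y) + (\<Sum>y\<in>NN. Wv (csv (y::'g state))))"])
  show "\<forall>\<^sub>F u in at_right 0. 0 \<le> \<bar>sNN u\<bar>" by simp
  show "\<forall>\<^sub>F u in at_right 0. \<bar>sNN u\<bar> \<le> u * (n1 NN (EE u) + (\<Sum>y\<in>NN. Wv y) + (\<Sum>y\<in>NN. Wv (csv (y::'g state))))"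
    using ev_small[OF ctx3] by eventually_elim (rule sNN_bound, auto)
  show "((\<lambda>u. 0) \<longlongrightarrow> 0) (at_right 0)" by simp
  have "((\<lambda>u::real. u) \<longlongrightarrow> 0) (at_right 0)" by (rule tendsto_ident_at)
  then have "((\<lambda>u. u * (n1 NN (EE u) + (\<Sum>y\<in>NN. Wv y) + (\<Sum>y\<in>NN. Wv (csv (y::'g state))))) \<longlongrightarrow> 0 * (0 + (\<Sum>y\<in>NN. Wv y) + (\<Sum>y\<in>NN. Wv (csv (y::'g state))))) (at_right 0)"
    by (intro tendsto_intros nE_lim[OF ctx3])
  then show "((\<lambda>u. u * (n1 NN (EE u) + (\<Sum>y\<in>NN. Wv y) + (\<Sum>y\<in>NN. Wv (csv (y::'g state))))) \<longlongrightarrow> 0) (at_right 0)" by simp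
qed

lemma aA_lim: "((\<lambda>u. a u + A u) \<longlongrightarrow> 1) (at_right 0)"
proof -
  have "((\<lambda>u. 1 - sNN u) \<longlongrightarrow> 1 - 0) (at_right 0)" by (intro tendsto_intros sNN_lim)
  then have "((\<lambda>u. 1 - sNN u) \<longlongrightarrow> 1) (at_right 0)" by simp
  moreover have "\<forall>\<^sub>F u in at_right 0. 1 - sNN u = a u + A u"
    using ev_small[OF ctx3]
  proof eventually_elim
    case (elim u) then show ?case using mass_eq[of u] by linarith
  qed
  ultimately show ?thesis by (rule tendsto_ev_eq)
qed

lemma a_lim: "(a \<longlongrightarrow> 1 - \<nu>) (at_right 0)"
proof -
  have "((\<lambda>u. (1 - \<nu>) * (a u + A u) + (a u * \<nu> - A u * (1 - \<nu>))) \<longlongrightarrow> (1 - \<nu>) * 1 + 0) (at_right 0)"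
    by (intro tendsto_intros aA_lim phi_lim)
  moreover have "(1 - \<nu>) * (a u + A u) + (a u * \<nu> - A u * (1 - \<nu>)) = a u" for u
    by (simp add: algebra_simps)
  ultimately show ?thesis by simp
qed

lemma A_lim: "(A \<longlongrightarrow> \<nu>) (at_right 0)"
proof -
  have "((\<lambda>u. (a u + A u) - a u) \<longlongrightarrow> 1 - (1 - \<nu>)) (at_right 0)"
    by (intro tendsto_intros aA_lim a_lim)
  then show ?thesis by simp
qed

lemma E_lim: "y \<in> NN \<Longrightarrow> ((\<lambda>u. EE u y) \<longlongrightarrow> 0) (at_right 0)"
proof -
  assume y: "y \<in> NN"
  show ?thesis
  proof (rule tendsto_rabs_zero_cancel, rule tendsto_sandwich[of "\<lambda>_. 0" _ _ "\<lambda>u. n1 NN (EE u)"])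
    show "\<forall>\<^sub>F u in at_right 0. 0 \<le> \<bar>EE u y\<bar>" by simp
    show "\<forall>\<^sub>F u in at_right 0. \<bar>EE u y\<bar> \<le> n1 NN (EE u)"
      unfolding n1_def by (rule always_eventually, rule allI, rule member_le_sum[OF y]) auto
  qed (auto intro: nE_lim[OF ctx3])
qed

definition lv where "lv y = (1 - \<nu>) * \<nu> * Wv y + \<nu> * (1 - \<nu>) * Wv (csv y)"

lemma Pu_lim: "y \<in> NN \<Longrightarrow> ((\<lambda>u. P u y / u) \<longlongrightarrow> lv y) (at_right 0)"
proof -
  assume y: "y \<in> NN"
  have "((\<lambda>u. EE u y + a u * \<nu> * Wv y + A u * (1 - \<nu>) * Wv (csv y)) \<longlongrightarrow> 0 + (1 - \<nu>) * \<nu> * Wv y + \<nu> * (1 - \<nu>) * Wv (csv y)) (at_right 0)"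
    by (intro tendsto_intros E_lim[OF y] a_lim A_lim)
  then have "((\<lambda>u. EE u y + a u * \<nu> * Wv y + A u * (1 - \<nu>) * Wv (csv y)) \<longlongrightarrow> (1 - \<nu>) * \<nu> * Wv y + \<nu> * (1 - \<nu>) * Wv (csv y)) (at_right 0)"
    by simp
  moreover have "\<forall>\<^sub>F u in at_right 0. EE u y + a u * \<nu> * Wv y + A u * (1 - \<nu>) * Wv (csv y) = P u y / u"
    using eventually_pos by eventually_elim (simp add: P_E)
  ultimately show ?thesis unfolding lv_def by (rule tendsto_ev_eq)
qed

definition Dn where "Dn = (\<Sum>y\<in>NN. lv y)"

lemma Dn_pos: "0 < Dn"
proof -
  have "(\<Sum>y\<in>NN. (1 - \<nu>) * \<nu> * Wv y) \<le> Dn"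
    unfolding Dn_def lv_def
  proof (rule sum_mono)
    fix y :: "'g state" assume y: "y \<in> NN"
    have "0 \<le> \<nu> * (1 - \<nu>) * Wv (csv y)"
      using Wc_nn[OF ctx3 y] nu0 nu1 by (intro mult_nonneg_nonneg) auto
    then show "(1 - \<nu>) * \<nu> * Wv y \<le> (1 - \<nu>) * \<nu> * Wv y + \<nu> * (1 - \<nu>) * Wv (csv y)" by linarith
  qed
  moreover have "(\<Sum>y\<in>NN. (1 - \<nu>) * \<nu> * Wv y) = (1 - \<nu>) * \<nu> * (\<Sum>y\<in>NN. Wv y)"
    by (simp add: sum_distrib_left)
  moreover have "0 < (1 - \<nu>) * \<nu> * (\<Sum>y\<in>NN. Wv y)" using sumw_pos[OF ctx3] nu0 nu1 by simp
  ultimately show ?thesis by linarith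
qed

lemma den_lim: "((\<lambda>u. (1 - a u - A u) / u) \<longlongrightarrow> Dn) (at_right 0)"
proof -
  have "((\<lambda>u. \<Sum>y\<in>NN. P u y / u) \<longlongrightarrow> Dn) (at_right 0)"
    unfolding Dn_def by (rule tendsto_sum, rule Pu_lim)
  moreover have "\<forall>\<^sub>F u in at_right 0. (\<Sum>y\<in>NN. P u y / u) = (1 - a u - A u) / u"
    using ev_small[OF ctx3]
  proof eventually_elim
    case (elim u)
    then have "1 - a u - A u = sNN u" using mass_eq[of u] by linarith
    then show ?case unfolding sNN_def by (simp add: sum_divide_distrib)
  qed
  ultimately show ?thesis by (rule tendsto_ev_eq)
qed

lemma RMC_val: "x \<in> NN \<Longrightarrow> pi_RMC p \<nu> x = lv x / Dn"
proof -
  assume x: "x \<in> NN"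
  have "((\<lambda>u. (P u x / u) / ((1 - a u - A u) / u)) \<longlongrightarrow> lv x / Dn) (at_right 0)"
    by (rule tendsto_divide[OF Pu_lim[OF x] den_lim]) (use Dn_pos in simp)
  moreover have "\<forall>\<^sub>F u in at_right 0. (P u x / u) / ((1 - a u - A u) / u) =
      pi_MSS p u \<nu> x / (1 - pi_MSS p u \<nu> all_zero - pi_MSS p u \<nu> all_one)"
    using eventually_pos by eventually_elim (simp add: PI_d pa_d pA_d)
  ultimately have "((\<lambda>u. pi_MSS p u \<nu> x / (1 - pi_MSS p u \<nu> all_zero - pi_MSS p u \<nu> all_one)) \<longlongrightarrow> lv x / Dn) (at_right 0)"
    by (rule tendsto_ev_eq)
  then show ?thesis unfolding pi_RMC_def by (rule tendsto_Lim[OF trivial_limit_at_right_real])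
qed

lemma RMC_sym: "x \<in> NN \<Longrightarrow> pi_RMC p \<nu> (csv x) = pi_RMC p \<nu> x"
proof -
  assume x: "x \<in> NN"
  have "lv (csv x) = lv x" unfolding lv_def by (simp add: algebra_simps)
  then show ?thesis using RMC_val[OF x] RMC_val[OF compl_NN[OF x]] by simp
qed

end


theorem proposition2:
  fixes p :: "('g::finite) event \<Rightarrow> real" and \<nu> :: real and x :: "'g state"
  assumes "replacement_rule p"
    and "fixation_axiom p"
    and "0 < \<nu>" and "\<nu> < 1"
    and "x \<noteq> all_zero" and "x \<noteq> all_one"
  shows "pi_RMC p \<nu> (complement_state x) = pi_RMC p \<nu> x"
proof -
  obtain g es where es_len: "length es \<ge> 1" and es_pos: "\<forall>e\<in>set es. p e > 0"
    and es_g: "\<exists>e\<in>set es. g \<in> fst e" and es_fix: "\<forall>h. foldr (\<circ>) (map extend_event es) id h = g"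
    using assms(2) unfolding fixation_axiom_def by blast
  obtain h1 where h1: "x h1" using assms(5) by (auto simp: all_zero_def fun_eq_iff)
  obtain h2 where h2: "\<not> x h2" using assms(6) by (auto simp: all_one_def fun_eq_iff)
  have ne: "h1 \<noteq> h2" using h1 h2 by auto
  have "card {h1, h2} \<le> CARD('g)" by (rule card_mono) auto
  then have card2: "CARD('g) \<ge> 2" using ne by simp
  have xN: "x \<in> NN" using assms(5,6) by (simp add: NN_def)
  show ?thesis by (rule RMC_sym[OF assms(1,3,4) es_len es_pos es_fix es_g card2 xN])
qed


end
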